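(* For all $\phi,\psi\in\mathfrak M$, $$\lim_{\varepsilon\to0}\mathfrak t_\varepsilon[\psi,\phi]=\mathfrak t_{\rm AB}[\psi,\phi].$$
   Context: Work in $L^2(\mathbb{R})$ with $(f,g)=\int\overline{f}g\,dx$; $q$ is multiplication by $x$, $p=-i\,d/dx$, $t=q^{-1}p$ with $D(t)=\{f\in D(p):pf\in D(q^{-1})\}$, $t^*$ its adjoint; $L^2_0$, $L^2_1$ the even/odd subspaces. For $0<\varepsilon\le1$ define $S_\varepsilon$ in $L^2_0$ by $D(S_\varepsilon)=\{f\in L^2_0\cap\bigcap_nD(t^{2n+1}):\sum_{n=0}^N\frac{(-1)^n}{2n+1}(\sqrt\varepsilon t)^{2n+1}f$ converges in norm$\}$, $S_\varepsilon f=-\varepsilon^{-1/2}\sum_{n\ge0}\frac{(-1)^n}{2n+1}(\sqrt\varepsilon t)^{2n+1}f$, and $S^*_\varepsilon$ (notation only) in $L^2_1$ by the same formulas with $t^*$ and $L^2_1$. Let $\mathfrak M_0$ be the span of $\{x^{2n}e^{-\alpha x^2/2}:n\ge0,\alpha\in(0,1)\}$, $\mathfrak M_1$ the span of $\{x^{2n+1}e^{-\alpha x^2/2}:n\ge0,\alpha\in(0,1)\}$, and $\mathfrak M=\mathfrak M_0\oplus\mathfrak M_1$ (one has $\mathfrak M_0\subset D(S_\varepsilon)\cap D(t)$ and $\mathfrak M_1\subset D(S^*_\varepsilon)\cap D(t^* )$ for all $0<\varepsilon\le1$). For $\psi=\psi_0\oplus\psi_1$, $\phi=\phi_0\oplus\phi_1\in\mathfrak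 M$ set $\mathfrak t_\varepsilon[\psi,\phi]=\frac12((\psi_0,S_\varepsilon\phi_0)+(S_\varepsilon\psi_0,\phi_0))+\frac12((\psi_1,S^*_\varepsilon\phi_1)+(S^*_\varepsilon\psi_1,\phi_1))$ and $\mathfrak t_{\rm AB}[\psi,\phi]=-\frac12((\psi_0,t\phi_0)+(t\psi_0,\phi_0))-\frac12((\psi_1,t^*\phi_1)+(t^*\psi_1,\phi_1))$. *)

theory Defs
  imports "HOL-Analysis.Analysis"
begin

text \<open>Elements of L2(R) are represented by measurable functions real => complex;
  operators are represented by their graphs as relations between representatives
  (values determined up to equality almost everywhere).\<close>

type_synonym fn = "real \<Rightarrow> complex"

definition L2 :: "fn \<Rightarrow> bool" where
  "L2 f \<longleftrightarrow> f \<in> borel_measurable lborel \<and> integrable lborel (\<lambda>x. (cmod (f x))\<^sup>2)"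

definition l2_inner :: "fn \<Rightarrow> fn \<Rightarrow> complex" where
  "l2_inner f g = (LINT x|lborel. cnj (f x) * g x)"

definition l2_norm :: "fn \<Rightarrow> real" where
  "l2_norm f = sqrt (LINT x|lborel. (cmod (f x))\<^sup>2)"

definition ae_eq :: "fn \<Rightarrow> fn \<Rightarrow> bool" where
  "ae_eq f g \<longleftrightarrow> (AE x in lborel. f x = g x)"

definition L2_even :: "fn \<Rightarrow> bool" where
  "L2_even f \<longleftrightarrow> L2 f \<and> (AE x in lborel. f (- x) = f x)"

definition L2_odd :: "fn \<Rightarrow> bool" where
  "L2_odd f \<longleftrightarrow> L2 f \<and> (AE x in lborel. f (- x) = - f x)"

definition test_fun :: "fn \<Rightarrow> bool" where
  "test_fun \<phi> \<longleftrightarrow> (\<exists>D :: nat \<Rightarrow> fn. D 0 = \<phi> \<and>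
      (\<forall>k x. (D k has_vector_derivative D (Suc k) x) (at x))) \<and>
    (\<exists>R. \<forall>x. \<bar>x\<bar> > R \<longrightarrow> \<phi> x = 0)"

definition weak_deriv :: "fn \<Rightarrow> fn \<Rightarrow> bool" where
  "weak_deriv f g \<longleftrightarrow> L2 f \<and> L2 g \<and>
     (\<forall>\<phi>. test_fun \<phi> \<longrightarrow>
        (LINT x|lborel. f x * vector_derivative \<phi> (at x)) = - (LINT x|lborel. g x * \<phi> x))"

text \<open>Momentum p = -i d/dx on its self-adjoint domain H^1.\<close>
definition p_rel :: "fn \<Rightarrow> fn \<Rightarrow> bool" where
  "p_rel f h \<longleftrightarrow> L2 h \<and> (\<exists>g. weak_deriv f g \<and> (AE x in lborel. h x = - \<i> * g x))"

definition qinv_rel :: "fn \<Rightarrow> fn \<Rightarrow> bool" where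
  "qinv_rel f h \<longleftrightarrow> L2 f \<and> L2 h \<and> (AE x in lborel. h x = f x / of_real x)"

definition t_rel :: "fn \<Rightarrow> fn \<Rightarrow> bool" where
  "t_rel f h \<longleftrightarrow> (\<exists>g. p_rel f g \<and> qinv_rel g h)"

definition tadj_rel :: "fn \<Rightarrow> fn \<Rightarrow> bool" where
  "tadj_rel g h \<longleftrightarrow> L2 g \<and> L2 h \<and>
     (\<forall>f k. t_rel f k \<longrightarrow> l2_inner g k = l2_inner h f)"

fun rel_pow :: "(fn \<Rightarrow> fn \<Rightarrow> bool) \<Rightarrow> nat \<Rightarrow> fn \<Rightarrow> fn \<Rightarrow> bool" where
  "rel_pow A 0 f h \<longleftrightarrow> L2 f \<and> L2 h \<and> ae_eq f h"
| "rel_pow A (Suc n) f h \<longleftrightarrow> (\<exists>m. A f m \<and> rel_pow A n m h)"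

definition S_rel :: "(fn \<Rightarrow> fn \<Rightarrow> bool) \<Rightarrow> (fn \<Rightarrow> bool) \<Rightarrow> real \<Rightarrow> fn \<Rightarrow> fn \<Rightarrow> bool" where
  "S_rel A P \<epsilon> f g \<longleftrightarrow> P f \<and>
     (\<exists>u s. (\<forall>n. rel_pow A (2*n+1) f (u n)) \<and> L2 s \<and>
        (\<lambda>N. l2_norm (\<lambda>x. (\<Sum>n\<le>N. of_real ((-1)^n / real (2*n+1) * (sqrt \<epsilon>)^(2*n+1)) * u n x) - s x))
          \<longlonglongrightarrow> 0 \<and>
        L2 g \<and> (AE x in lborel. g x = - of_real (1 / sqrt \<epsilon>) * s x))"

definition S_op :: "real \<Rightarrow> fn \<Rightarrow> fn" where
  "S_op \<epsilon> f = (SOME g. S_rel t_rel L2_even \<epsilon> f g)"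

definition Sadj_op :: "real \<Rightarrow> fn \<Rightarrow> fn" where
  "Sadj_op \<epsilon> f = (SOME g. S_rel tadj_rel L2_odd \<epsilon> f g)"

definition t_op :: "fn \<Rightarrow> fn" where
  "t_op f = (SOME h. t_rel f h)"

definition tadj_op :: "fn \<Rightarrow> fn" where
  "tadj_op f = (SOME h. tadj_rel f h)"

definition M0 :: "fn set" where
  "M0 = {f. \<exists>F (c :: nat \<times> real \<Rightarrow> complex). finite F \<and> (\<forall>(n,a)\<in>F. 0 < a \<and> a < 1) \<and>
      f = (\<lambda>x. \<Sum>(n,a)\<in>F. c (n,a) * of_real (x^(2*n) * exp (- a * x\<^sup>2 / 2)))}"

definition M1 :: "fn set" where
  "M1 = {f. \<exists>F (c :: nat \<times> real \<Rightarrow> complex). finite F \<and> (\<forall>(n,a)\<in>F. 0 < a \<and> a < 1) \<and>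
      f = (\<lambda>x. \<Sum>(n,a)\<in>F. c (n,a) * of_real (x^(2*n+1) * exp (- a * x\<^sup>2 / 2)))}"

text \<open>Forms on M = M_0 (+) M_1; psi = psi0 (+) psi1, phi = phi0 (+) phi1.\<close>
definition t_eps :: "real \<Rightarrow> fn \<Rightarrow> fn \<Rightarrow> fn \<Rightarrow> fn \<Rightarrow> complex" where
  "t_eps \<epsilon> \<psi>0 \<psi>1 \<phi>0 \<phi>1 =
     (l2_inner \<psi>0 (S_op \<epsilon> \<phi>0) + l2_inner (S_op \<epsilon> \<psi>0) \<phi>0) / 2 +
     (l2_inner \<psi>1 (Sadj_op \<epsilon> \<phi>1) + l2_inner (Sadj_op \<epsilon> \<psi>1) \<phi>1) / 2"

definition t_AB :: "fn \<Rightarrow> fn \<Rightarrow> fn \<Rightarrow> fn \<Rightarrow> complex" where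
  "t_AB \<psi>0 \<psi>1 \<phi>0 \<phi>1 =
     - (l2_inner \<psi>0 (t_op \<phi>0) + l2_inner (t_op \<psi>0) \<phi>0) / 2
     - (l2_inner \<psi>1 (tadj_op \<phi>1) + l2_inner (tadj_op \<psi>1) \<phi>1) / 2"

end

theory Submission
  imports Defs "HOL-Computational_Algebra.Polynomial" "HOL-Probability.Probability"
begin


definition smooth :: "fn \<Rightarrow> bool" where
 "smooth f \<longleftrightarrow> (\<exists>D::nat \<Rightarrow> fn. D 0 = f \<and> (\<forall>k x. (D k has_vector_derivative D (Suc k) x) (at x)))"

lemma test_fun_iff: "test_fun \<phi> \<longleftrightarrow> smooth \<phi> \<and> (\<exists>R. \<forall>x. \<bar>x\<bar> > R \<longrightarrow> \<phi> x = 0)"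
  by (simp add: test_fun_def smooth_def)

lemma smooth_coinduct:
  assumes "P f" and step: "\<And>g. P g \<Longrightarrow> \<exists>g'. (\<forall>x. (g has_vector_derivative g' x) (at x)) \<and> P g'"
  shows "smooth f"
proof -
  define nx where "nx g = (SOME g'. (\<forall>x. (g has_vector_derivative g' x) (at x)) \<and> P g')" for g
  have nx: "P g \<Longrightarrow> (\<forall>x. (g has_vector_derivative nx g x) (at x)) \<and> P (nx g)" for g
    unfolding nx_def using someI_ex[OF step] by blast
  define D where "D k = (nx ^^ k) f" for k
  have P: "P (D k)" for k by (induction k) (auto simp: D_def nx assms(1))
  have "\<forall>k x. (D k has_vector_derivative D (Suc k) x) (at x)"
    using nx[OF P] by (simp add: D_def)
  then show ?thesis unfolding smooth_def
    by (intro exI[of _ D]) (simp add: D_def)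
qed

lemma smooth_deriv:
  assumes "smooth f"
  shows "\<exists>f'. (\<forall>x. (f has_vector_derivative f' x) (at x)) \<and> smooth f'"
proof -
  obtain D where D: "D 0 = f" "\<And>k x. (D k has_vector_derivative D (Suc k) x) (at x)"
    using assms unfolding smooth_def by blast
  show ?thesis
    apply (rule exI[of _ "D 1"])
    using D unfolding smooth_def
    by (auto intro!: exI[of _ "\<lambda>k. D (Suc k)"])
qed

lemma smooth_deriv':
  assumes "smooth f" "\<And>x. (f has_vector_derivative f' x) (at x)"
  shows "smooth f'"
proof -
  obtain g where g: "\<And>x. (f has_vector_derivative g x) (at x)" "smooth g"
    using smooth_deriv[OF assms(1)] by blast
  have "g = f'" using g(1) assms(2) vector_derivative_unique_at by blast
  with g show ?thesis by simp
qed

definition dv :: "fn \<Rightarrow> fn" where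
  "dv f = (SOME f'. (\<forall>x. (f has_vector_derivative f' x) (at x)) \<and> smooth f')"

lemma dv: assumes "smooth f"
  shows "(f has_vector_derivative dv f x) (at x)" "smooth (dv f)"
  using someI_ex[OF smooth_deriv[OF assms]] unfolding dv_def[symmetric] by blast+

lemma smooth_const: "smooth (\<lambda>x. c)"
  by (rule smooth_coinduct[where P="\<lambda>g. \<exists>c. g = (\<lambda>x. c)"]) (auto intro!: exI[of _ "\<lambda>x. 0"])

lemma smooth_id: "smooth (\<lambda>x. of_real x)"
proof (rule smooth_coinduct[where P="\<lambda>g::fn. g = (\<lambda>x. of_real x) \<or> (\<exists>c. g = (\<lambda>x. c))"])
  fix g :: fn assume "g = (\<lambda>x. of_real x) \<or> (\<exists>c. g = (\<lambda>x. c))"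
  then show "\<exists>g'::fn. (\<forall>x. (g has_vector_derivative g' x) (at x)) \<and> (g' = (\<lambda>x. of_real x) \<or> (\<exists>c. g' = (\<lambda>x. c)))"
  proof
    assume "g = (\<lambda>x. of_real x)"
    then show ?thesis
      by (intro exI[of _ "\<lambda>x. 1"]) (auto intro!: derivative_eq_intros)
  qed (auto intro!: exI[of _ "\<lambda>x. 0"])
qed simp

lemma smooth_add: assumes "smooth f" "smooth g" shows "smooth (\<lambda>x. f x + g x)"
proof (rule smooth_coinduct[where P="\<lambda>h. \<exists>f g. smooth f \<and> smooth g \<and> h = (\<lambda>x. f x + g x)"])
  fix h assume "\<exists>f g. smooth f \<and> smooth g \<and> h = (\<lambda>x. f x + g x)"
  then obtain f g where fg: "smooth f" "smooth g" "h = (\<lambda>x. f x + g x)" by blast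
  show "\<exists>h'. (\<forall>x. (h has_vector_derivative h' x) (at x)) \<and> (\<exists>f g. smooth f \<and> smooth g \<and> h' = (\<lambda>x. f x + g x))"
    using fg dv[OF fg(1)] dv[OF fg(2)]
    by (intro exI[of _ "\<lambda>x. dv f x + dv g x"]) (auto intro!: derivative_eq_intros)
qed (use assms in blast)

lemma smooth_sum_list_deriv:
  assumes "\<forall>(f,g)\<in>set L. smooth f \<and> smooth g"
  shows "((\<lambda>x. \<Sum>(f,g)\<leftarrow>L. f x * g x) has_vector_derivative
           (\<Sum>(f,g)\<leftarrow>concat (map (\<lambda>(f,g). [(dv f, g), (f, dv g)]) L). f x * g x)) (at x)"
  using assms
proof (induction L)
  case Nil then show ?case by simp
next
  case (Cons p L)
  obtain f g where p: "p = (f,g)" by fastforce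
  have fg: "smooth f" "smooth g" using Cons.prems p by auto
  show ?case
    using Cons.IH Cons.prems dv[OF fg(1)] dv[OF fg(2)] unfolding p
    by (auto intro!: derivative_eq_intros simp: algebra_simps)
qed

lemma smooth_mult: assumes "smooth f" "smooth g" shows "smooth (\<lambda>x. f x * g x)"
proof (rule smooth_coinduct[where P="\<lambda>h. \<exists>L. (\<forall>(f,g)\<in>set L. smooth f \<and> smooth g) \<and> h = (\<lambda>x. \<Sum>(f,g)\<leftarrow>L. f x * g x)"])
  show "\<exists>L. (\<forall>(f,g)\<in>set L. smooth f \<and> smooth g) \<and> (\<lambda>x. f x * g x) = (\<lambda>x. \<Sum>(f,g)\<leftarrow>L. f x * g x)"
    using assms by (intro exI[of _ "[(f,g)]"]) auto
next
  fix h assume "\<exists>L. (\<forall>(f,g)\<in>set L. smooth f \<and> smooth g) \<and> h = (\<lambda>x. \<Sum>(f,g)\<leftarrow>L. f x * g x)"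
  then obtain L where L: "\<forall>(f,g)\<in>set L. smooth f \<and> smooth g" "h = (\<lambda>x. \<Sum>(f,g)\<leftarrow>L. f x * g x)" by blast
  let ?L = "concat (map (\<lambda>(f,g). [(dv f, g), (f, dv g)]) L)"
  have "\<forall>(f,g)\<in>set ?L. smooth f \<and> smooth g"
    using L(1) dv by fastforce
  then show "\<exists>h'. (\<forall>x. (h has_vector_derivative h' x) (at x)) \<and>
     (\<exists>L. (\<forall>(f,g)\<in>set L. smooth f \<and> smooth g) \<and> h' = (\<lambda>x. \<Sum>(f,g)\<leftarrow>L. f x * g x))"
    using smooth_sum_list_deriv[OF L(1)] L(2)
    by (intro exI[of _ "\<lambda>x. \<Sum>(f,g)\<leftarrow>?L. f x * g x"]) blast
qed

lemma smooth_affine: assumes "smooth f" shows "smooth (\<lambda>x. f (c * x + d))"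
proof (rule smooth_coinduct[where P="\<lambda>h. \<exists>g z. smooth g \<and> h = (\<lambda>x. z * g (c * x + d))"])
  show "\<exists>g z. smooth g \<and> (\<lambda>x. f (c * x + d)) = (\<lambda>x. z * g (c * x + d))"
    using assms by (intro exI[of _ f] exI[of _ 1]) auto
next
  fix h assume "\<exists>g z. smooth g \<and> h = (\<lambda>x. z * g (c * x + d))"
  then obtain g z where g: "smooth g" "h = (\<lambda>x. z * g (c * x + d))" by blast
  have "((\<lambda>x. z * g (c * x + d)) has_vector_derivative (z * of_real c) * dv g (c * x + d)) (at x)" for x
  proof -
    have "((g \<circ> (\<lambda>x. c * x + d)) has_vector_derivative (c *\<^sub>R dv g (c * x + d))) (at x)"
      by (rule vector_diff_chain_at) (auto intro!: derivative_eq_intros dv g simp: has_real_derivative_iff_has_vector_derivative[symmetric])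
    then show ?thesis
      by (auto dest!: has_vector_derivative_mult_right[where a=z] simp: o_def scaleR_conv_of_real ac_simps)
  qed
  then show "\<exists>h'. (\<forall>x. (h has_vector_derivative h' x) (at x)) \<and> (\<exists>g z. smooth g \<and> h' = (\<lambda>x. z * g (c * x + d)))"
    using g dv[OF g(1)]
    by (intro exI[of _ "\<lambda>x. (z * of_real c) * dv g (c * x + d)"]) auto
qed

lemma smooth_cmult: "smooth f \<Longrightarrow> smooth (\<lambda>x. c * f x)"
  using smooth_mult[OF smooth_const] by blast

lemma smooth_minus: "smooth f \<Longrightarrow> smooth g \<Longrightarrow> smooth (\<lambda>x. f x - g x)"
  using smooth_add[of f "\<lambda>x. (-1) * g x"] smooth_cmult[of g "-1"] by simp

lemma smooth_power: "smooth f \<Longrightarrow> smooth (\<lambda>x. f x ^ k)"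
  by (induction k) (auto intro: smooth_const smooth_mult)

lemma smooth_sum: "finite I \<Longrightarrow> (\<And>i. i \<in> I \<Longrightarrow> smooth (f i)) \<Longrightarrow> smooth (\<lambda>x. \<Sum>i\<in>I. f i x)"
  by (induction I rule: finite_induct) (auto intro: smooth_const smooth_add)

lemma has_vector_derivative_power_c:
  fixes f :: fn
  assumes "(f has_vector_derivative f') (at x)"
  shows "((\<lambda>x. f x ^ k) has_vector_derivative (of_nat k * f x ^ (k - 1) * f')) (at x)"
proof (induction k)
  case (Suc k)
  have "((\<lambda>x. f x * f x ^ k) has_vector_derivative (f x * (of_nat k * f x ^ (k - 1) * f') + f' * f x ^ k)) (at x)"
    by (intro has_vector_derivative_mult assms Suc)
  moreover have "f x * (of_nat k * f x ^ (k - 1) * f') + f' * f x ^ k = of_nat (Suc k) * f x ^ (Suc k - 1) * f'"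
    by (cases k) (auto simp: algebra_simps)
  ultimately show ?case by simp
qed simp

lemma has_vector_derivative_inverse_c:
  fixes f :: fn
  assumes "(f has_vector_derivative f') (at x)" "f x \<noteq> 0"
  shows "((\<lambda>x. inverse (f x)) has_vector_derivative (- f' / (f x)^2)) (at x)"
proof -
  have "((\<lambda>x. inverse (f x)) has_derivative (\<lambda>h. - (inverse (f x) * (h *\<^sub>R f') * inverse (f x)))) (at x)"
    using Deriv.has_derivative_inverse[OF assms(2) assms(1)[unfolded has_vector_derivative_def]] by simp
  moreover have "(\<lambda>h. - (inverse (f x) * (h *\<^sub>R f') * inverse (f x))) = (\<lambda>h. h *\<^sub>R (- f' / (f x)^2))"
    using assms(2) by (auto simp: fun_eq_iff scaleR_conv_of_real field_simps power2_eq_square)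
  ultimately show ?thesis unfolding has_vector_derivative_def by simp
qed

lemma smooth_inverse: assumes "smooth f" "\<And>x. f x \<noteq> 0" shows "smooth (\<lambda>x. inverse (f x))"
proof (rule smooth_coinduct[where P="\<lambda>h. \<exists>q k. smooth q \<and> h = (\<lambda>x. q x / f x ^ k)"])
  show "\<exists>q k. smooth q \<and> (\<lambda>x. inverse (f x)) = (\<lambda>x. q x / f x ^ k)"
    by (intro exI[of _ "\<lambda>x. 1"] exI[of _ 1]) (auto simp: smooth_const field_simps)
next
  fix h assume "\<exists>q k. smooth q \<and> h = (\<lambda>x. q x / f x ^ k)"
  then obtain q k where q: "smooth q" "h = (\<lambda>x. q x / f x ^ k)" by blast
  define q' where "q' x = dv q x * f x - of_nat k * q x * dv f x" for x
  have sq': "smooth q'" unfolding q'_def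
    by (intro smooth_minus smooth_mult dv q assms smooth_const)
  have "(h has_vector_derivative q' x / f x ^ (Suc k)) (at x)" for x
  proof -
    have d: "((\<lambda>x. inverse (f x ^ k)) has_vector_derivative (- (of_nat k * f x ^ (k - 1) * dv f x) / (f x ^ k)^2)) (at x)"
      by (rule has_vector_derivative_inverse_c[OF has_vector_derivative_power_c[OF dv(1)[OF assms(1)]]])
         (simp add: assms)
    have "((\<lambda>x. q x * inverse (f x ^ k)) has_vector_derivative
        (q x * (- (of_nat k * f x ^ (k - 1) * dv f x) / (f x ^ k)^2) + dv q x * inverse (f x ^ k))) (at x)"
      by (intro has_vector_derivative_mult d dv q)
    moreover have "q x * (- (of_nat k * f x ^ (k - 1) * dv f x) / (f x ^ k)^2) + dv q x * inverse (f x ^ k)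
        = q' x / f x ^ (Suc k)"
      using assms(2)[of x] unfolding q'_def
      by (cases k) (auto simp: field_simps power2_eq_square)
    ultimately show ?thesis unfolding q(2) by (simp add: field_simps)
  qed
  then show "\<exists>h'. (\<forall>x. (h has_vector_derivative h' x) (at x)) \<and> (\<exists>q k. smooth q \<and> h' = (\<lambda>x. q x / f x ^ k))"
    using sq' by (intro exI[of _ "\<lambda>x. q' x / f x ^ (Suc k)"]) blast
qed


lemma poly_exp_at_top: "((\<lambda>y. poly p y * exp (- y)) \<longlongrightarrow> (0::real)) at_top"
proof -
  have "((\<lambda>y. \<Sum>i\<le>degree p. coeff p i * (y ^ i / exp y)) \<longlongrightarrow> (\<Sum>i\<le>degree p. coeff p i * 0)) at_top"
    by (intro tendsto_sum tendsto_mult tendsto_const tendsto_power_div_exp_0)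
  moreover have "(\<lambda>y. \<Sum>i\<le>degree p. coeff p i * (y ^ i / exp y)) = (\<lambda>y. poly p y * exp (- y))"
    by (auto simp: fun_eq_iff poly_altdef sum_distrib_right exp_minus divide_inverse mult.assoc)
  ultimately show ?thesis by simp
qed

lemma poly_exp_at_right0: "((\<lambda>x. poly p (1/x) * exp (- (1/x))) \<longlongrightarrow> (0::real)) (at_right 0)"
  using filterlim_compose[OF poly_exp_at_top[of p] filterlim_inverse_at_top_right]
  by (simp add: o_def inverse_eq_divide)

definition psr :: "real poly \<Rightarrow> real \<Rightarrow> real" where
  "psr p x = (if x > 0 then poly p (1/x) * exp (- (1/x)) else 0)"

lemma psr_deriv: "(psr p has_real_derivative psr ([:0,0,1:] * (p - pderiv p)) x) (at x)"
proof (cases "x > 0")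
  case True
  have "((\<lambda>x. poly p (1/x) * exp (- (1/x))) has_real_derivative
         (poly (pderiv p) (1/x) * (- 1 / x^2)) * exp (- (1/x)) + poly p (1/x) * (exp (- (1/x)) * (1 / x^2))) (at x)"
    using True by (auto intro!: derivative_eq_intros DERIV_chain2[OF poly_DERIV] simp: power2_eq_square field_simps)
  moreover have "(poly (pderiv p) (1/x) * (- 1 / x^2)) * exp (- (1/x)) + poly p (1/x) * (exp (- (1/x)) * (1 / x^2))
      = psr ([:0,0,1:] * (p - pderiv p)) x"
    using True by (simp add: psr_def poly_diff field_simps power2_eq_square)
  ultimately have "((\<lambda>x. poly p (1/x) * exp (- (1/x))) has_real_derivative psr ([:0,0,1:] * (p - pderiv p)) x) (at x)"
    by simp
  then show ?thesis
    by (rule has_field_derivative_transform_within_open[where S="{0<..}"]) (use True in \<open>auto simp: psr_def\<close>)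
next
  case False
  show ?thesis
  proof (cases "x < 0")
    case True
    have "((\<lambda>x. 0) has_real_derivative 0) (at x)" by simp
    then have "(psr p has_real_derivative 0) (at x)"
      by (rule has_field_derivative_transform_within_open[where S="{..<0}"]) (use True in \<open>auto simp: psr_def\<close>)
    then show ?thesis using True by (simp add: psr_def)
  next
    case False
    with \<open>\<not> x > 0\<close> have x0: "x = 0" by simp
    have "((\<lambda>y. (psr p y - psr p 0) / (y - 0)) \<longlongrightarrow> 0) (at 0)"
    proof (rule filterlim_split_at)
      show "((\<lambda>y. (psr p y - psr p 0) / (y - 0)) \<longlongrightarrow> 0) (at_left 0)"
        by (rule tendsto_eventually) (auto simp: eventually_at_left_field psr_def intro!: exI[of _ "-1"])
      have "((\<lambda>x. poly (pCons 0 p) (1/x) * exp (- (1/x))) \<longlongrightarrow> (0::real)) (at_right 0)"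
        by (rule poly_exp_at_right0)
      then show "((\<lambda>y. (psr p y - psr p 0) / (y - 0)) \<longlongrightarrow> 0) (at_right 0)"
        apply (rule tendsto_cong[THEN iffD1, rotated])
        by (auto simp: eventually_at_right_field psr_def intro!: exI[of _ 1])
    qed
    then show ?thesis using x0 by (simp add: has_field_derivative_iff psr_def)
  qed
qed

lemma psr_nonneg: "psr 1 x \<ge> 0" and psr_pos: "x > 0 \<Longrightarrow> psr 1 x > 0"
  by (auto simp: psr_def)

lemma psr_zero: "x \<le> 0 \<Longrightarrow> psr p x = 0" by (simp add: psr_def)

lemma smooth_psr: "smooth (\<lambda>x. of_real (psr p x))"
proof (rule smooth_coinduct[where P="\<lambda>h. \<exists>p. h = (\<lambda>x. of_real (psr p x))"])
  fix h :: fn assume "\<exists>p. h = (\<lambda>x. of_real (psr p x))"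
  then obtain p where p: "h = (\<lambda>x. of_real (psr p x))" by blast
  show "\<exists>g'. (\<forall>x. (h has_vector_derivative g' x) (at x)) \<and> (\<exists>p. g' = (\<lambda>x. of_real (psr p x)))"
    unfolding p
    by (intro exI[of _ "\<lambda>x. of_real (psr ([:0,0,1:] * (p - pderiv p)) x)"])
       (auto intro!: has_vector_derivative_of_real psr_deriv[of p, simplified])
qed blast

definition hst :: "real \<Rightarrow> real" where
  "hst x = psr 1 x / (psr 1 x + psr 1 (1 - x))"

lemma hst_den_pos: "psr 1 x + psr 1 (1 - x) > 0"
proof (cases "x > 0")
  case True then show ?thesis using psr_pos[of x] psr_nonneg[of "1-x"] by linarith
next
  case False then show ?thesis using psr_pos[of "1-x"] psr_nonneg[of x] by linarith
qed

lemma hst_0: "x \<le> 0 \<Longrightarrow> hst x = 0" by (simp add: hst_def psr_zero)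
lemma hst_1: "x \<ge> 1 \<Longrightarrow> hst x = 1"
  using hst_den_pos[of x] by (simp add: hst_def psr_zero)
lemma hst_bounds: "0 \<le> hst x" "hst x \<le> 1"
  using hst_den_pos[of x] psr_nonneg[of x] psr_nonneg[of "1-x"] by (auto simp: hst_def)

lemma smooth_hst: "smooth (\<lambda>x. of_real (hst x))"
proof -
  have s1: "smooth (\<lambda>x. of_real (psr 1 (-1 * x + 1)))"
    using smooth_affine[OF smooth_psr[of 1], where c="-1" and d=1] by simp
  have "smooth (\<lambda>x. of_real (psr 1 x) * inverse (of_real (psr 1 x) + of_real (psr 1 (-1 * x + 1))))"
  proof (intro smooth_mult smooth_psr smooth_inverse smooth_add s1)
    fix x
    show "complex_of_real (psr 1 x) + complex_of_real (psr 1 (- 1 * x + 1)) \<noteq> 0"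
      using hst_den_pos[of x] by (metis add.commute mult_minus1 of_real_add of_real_eq_0_iff order_less_irrefl uminus_add_conv_diff)
  qed
  then show ?thesis
    by (simp add: hst_def field_simps)
qed


lemma L2_meas: "L2 f \<Longrightarrow> f \<in> borel_measurable borel" by (simp add: L2_def)

lemma borel_measurable_cnj[measurable]:
  "f \<in> borel_measurable M \<Longrightarrow> (\<lambda>x. cnj (f x :: complex)) \<in> borel_measurable M"
  by (rule borel_measurable_continuous_on[OF continuous_on_cnj[OF continuous_on_id]])

lemma L2_cnj: "L2 f \<Longrightarrow> L2 (\<lambda>x. cnj (f x))"
  by (simp add: L2_def borel_measurable_cnj)

lemma L2_integrable_mult:
  assumes "L2 f" "L2 g" shows "integrable lborel (\<lambda>x. f x * g x)"
proof (rule Bochner_Integration.integrable_bound)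
  show "integrable lborel (\<lambda>x. ((cmod (f x))\<^sup>2 + (cmod (g x))\<^sup>2) / 2)"
    using assms unfolding L2_def by (intro integrable_divide integrable_add) auto
  have [measurable]: "f \<in> borel_measurable borel" "g \<in> borel_measurable borel" using assms by (auto simp: L2_def)
  show "(\<lambda>x. f x * g x) \<in> borel_measurable lborel" by measurable
  show "AE x in lborel. norm (f x * g x) \<le> norm (((cmod (f x))\<^sup>2 + (cmod (g x))\<^sup>2) / 2)"
  proof (intro AE_I2)
    fix x
    have "2 * (cmod (f x) * cmod (g x)) \<le> (cmod (f x))\<^sup>2 + (cmod (g x))\<^sup>2"
      using sum_squares_bound[of "cmod (f x)" "cmod (g x)"] by (simp add: algebra_simps power2_eq_square)
    then show "norm (f x * g x) \<le> norm (((cmod (f x))\<^sup>2 + (cmod (g x))\<^sup>2) / 2)"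
      by (simp add: norm_mult)
  qed
qed

lemma L2_zero: "L2 (\<lambda>x. 0)" by (simp add: L2_def)

lemma L2_add: assumes "L2 f" "L2 g" shows "L2 (\<lambda>x. f x + g x)"
  unfolding L2_def
proof
  have [measurable]: "f \<in> borel_measurable borel" "g \<in> borel_measurable borel" using assms by (auto simp: L2_def)
  show "(\<lambda>x. f x + g x) \<in> borel_measurable lborel" by measurable
  show "integrable lborel (\<lambda>x. (cmod (f x + g x))\<^sup>2)"
  proof (rule Bochner_Integration.integrable_bound)
    show "integrable lborel (\<lambda>x. 2 * (cmod (f x))\<^sup>2 + 2 * (cmod (g x))\<^sup>2)"
      using assms unfolding L2_def by (intro Bochner_Integration.integrable_add integrable_mult_right) auto
    show "(\<lambda>x. (cmod (f x + g x))\<^sup>2) \<in> borel_measurable lborel" by measurable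
    show "AE x in lborel. norm ((cmod (f x + g x))\<^sup>2) \<le> norm (2 * (cmod (f x))\<^sup>2 + 2 * (cmod (g x))\<^sup>2)"
    proof (intro AE_I2)
      fix x
      have t: "cmod (f x + g x) \<le> cmod (f x) + cmod (g x)" by (rule norm_triangle_ineq)
      have "(cmod (f x + g x))\<^sup>2 \<le> (cmod (f x) + cmod (g x))\<^sup>2"
        using t by (intro power_mono) auto
      also have "\<dots> \<le> 2 * (cmod (f x))\<^sup>2 + 2 * (cmod (g x))\<^sup>2"
        using sum_squares_bound[of "cmod (f x)" "cmod (g x)"] by (simp add: algebra_simps power2_eq_square)
      finally show "norm ((cmod (f x + g x))\<^sup>2) \<le> norm (2 * (cmod (f x))\<^sup>2 + 2 * (cmod (g x))\<^sup>2)"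
        by simp
    qed
  qed
qed

lemma L2_cmult: assumes "L2 f" shows "L2 (\<lambda>x. c * f x)"
  using assms unfolding L2_def by (auto simp: norm_mult power_mult_distrib)

lemma L2_minus: assumes "L2 f" "L2 g" shows "L2 (\<lambda>x. f x - g x)"
  using L2_add[OF assms(1) L2_cmult[OF assms(2), of "-1"]] by simp

lemma L2_sum: "finite I \<Longrightarrow> (\<And>i. i \<in> I \<Longrightarrow> L2 (f i)) \<Longrightarrow> L2 (\<lambda>x. \<Sum>i\<in>I. f i x)"
  by (induction I rule: finite_induct) (auto intro: L2_zero L2_add)

lemma integrable_cont_compact:
  fixes g :: "real \<Rightarrow> 'b::euclidean_space"
  assumes "continuous_on UNIV g" "\<And>x. \<bar>x\<bar> > R \<Longrightarrow> g x = 0"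
  shows "integrable lborel g"
proof -
  have "integrable lborel (\<lambda>x. indicator {-R..R} x *\<^sub>R g x)"
    by (rule borel_integrable_compact) (auto intro: continuous_on_subset[OF assms(1)])
  moreover have "(\<lambda>x. indicator {-R..R} x *\<^sub>R g x) = g"
    using assms(2) by (auto simp: fun_eq_iff indicator_def abs_if split: if_splits)
  ultimately show ?thesis by simp
qed

lemma L2_cont_compact:
  assumes "continuous_on UNIV g" "\<And>x. \<bar>x\<bar> > R \<Longrightarrow> g x = 0"
  shows "L2 g"
  unfolding L2_def
proof
  show "g \<in> borel_measurable lborel"
    using assms(1) by (simp add: borel_measurable_continuous_onI)
  show "integrable lborel (\<lambda>x. (cmod (g x))\<^sup>2)"
    by (rule integrable_cont_compact[where R=R]) (use assms in \<open>auto intro!: continuous_intros\<close>)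
qed

lemma deriv_zero_outside:
  fixes f :: "real \<Rightarrow> 'b::real_normed_vector"
  assumes "(f has_vector_derivative f') (at x)" "\<And>y. \<bar>y\<bar> > R \<Longrightarrow> f y = 0" "\<bar>x\<bar> > R"
  shows "f' = 0"
proof -
  have "((\<lambda>y. 0) has_vector_derivative 0) (at x)" by simp
  moreover have "open {y::real. R < \<bar>y\<bar>}"
    by (rule open_Collect_less) (auto intro: continuous_intros)
  ultimately have "(f has_vector_derivative 0) (at x)"
    by (rule has_vector_derivative_transform_within_open[where S="{y. \<bar>y\<bar> > R}"])
       (use assms in auto)
  then show ?thesis using assms(1) vector_derivative_unique_at by blast
qed

lemma ftc_zero:
  fixes G g :: "real \<Rightarrow> 'b::euclidean_space"
  assumes "\<And>x. (G has_vector_derivative g x) (at x)" "continuous_on UNIV g"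
    "\<And>x. \<bar>x\<bar> > R \<Longrightarrow> G x = 0"
  shows "integrable lborel g" "(LINT x|lborel. g x) = 0"
proof -
  have g0: "\<And>x. \<bar>x\<bar> > R \<Longrightarrow> g x = 0"
    using deriv_zero_outside[OF assms(1) assms(3)] by blast
  show int: "integrable lborel g" by (rule integrable_cont_compact[OF assms(2) g0])
  have R: "R \<ge> 0 \<or> True" by simp
  let ?a = "- \<bar>R\<bar> - 1" and ?b = "\<bar>R\<bar> + 1"
  have "(g has_integral (G ?b - G ?a)) {?a..?b}"
    by (rule fundamental_theorem_of_calculus) (auto intro: has_vector_derivative_at_within assms(1))
  moreover have "G ?b = 0" "G ?a = 0" by (auto intro!: assms(3))
  ultimately have "(g has_integral 0) {?a..?b}" by simp
  then have "(g has_integral 0) UNIV"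
  proof (rule has_integral_on_superset)
    fix x assume "x \<notin> {?a..?b}" then have "\<bar>x\<bar> > R" by auto
    then show "g x = 0" by (rule g0)
  qed auto
  moreover have "(g has_integral (LINT x|lborel. g x)) UNIV"
    by (rule has_integral_integral_lborel[OF int])
  ultimately show "(LINT x|lborel. g x) = 0" using has_integral_unique by blast
qed

lemma cont_of_deriv:
  fixes f :: "real \<Rightarrow> 'b::real_normed_vector"
  assumes "\<And>x. (f has_vector_derivative f' x) (at x)" shows "continuous_on UNIV f"
  using assms continuous_at_imp_continuous_on has_vector_derivative_continuous by blast

lemma test_funD:
  assumes "test_fun \<phi>"
  obtains \<phi>' R where "\<And>x. (\<phi> has_vector_derivative \<phi>' x) (at x)" "smooth \<phi>" "smooth \<phi>'"
    "continuous_on UNIV \<phi>" "continuous_on UNIV \<phi>'"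
    "\<And>x. \<bar>x\<bar> > R \<Longrightarrow> \<phi> x = 0" "\<And>x. \<bar>x\<bar> > R \<Longrightarrow> \<phi>' x = 0"
    "\<And>x. vector_derivative \<phi> (at x) = \<phi>' x"
proof -
  obtain R where R: "\<And>x. \<bar>x\<bar> > R \<Longrightarrow> \<phi> x = 0" and s: "smooth \<phi>"
    using assms unfolding test_fun_iff by blast
  obtain \<phi>' where d: "\<And>x. (\<phi> has_vector_derivative \<phi>' x) (at x)" and s': "smooth \<phi>'"
    using smooth_deriv[OF s] by blast
  obtain \<phi>'' where d': "\<And>x. (\<phi>' has_vector_derivative \<phi>'' x) (at x)"
    using smooth_deriv[OF s'] by blast
  show ?thesis
  proof (rule that[OF d s s' _ _ R])
    show "continuous_on UNIV \<phi>" using d by (rule cont_of_deriv)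
    show "continuous_on UNIV \<phi>'" using d' by (rule cont_of_deriv)
    show "\<And>x. \<bar>x\<bar> > R \<Longrightarrow> \<phi>' x = 0" using deriv_zero_outside[OF d R] by blast
    show "\<And>x. vector_derivative \<phi> (at x) = \<phi>' x" using d vector_derivative_at by blast
  qed
qed


lemma ibp_test:
  assumes F: "\<And>x. (F has_vector_derivative F' x) (at x)" "continuous_on UNIV F'" and t: "test_fun \<phi>"
  shows "(LINT x|lborel. F x * vector_derivative \<phi> (at x)) = - (LINT x|lborel. F' x * \<phi> x)"
proof -
  obtain \<phi>' R where p: "\<And>x. (\<phi> has_vector_derivative \<phi>' x) (at x)"
    "smooth \<phi>" "smooth \<phi>'" "continuous_on UNIV \<phi>" "continuous_on UNIV \<phi>'"
    "\<And>x. \<bar>x\<bar> > R \<Longrightarrow> \<phi> x = 0" "\<And>x. \<bar>x\<bar> > R \<Longrightarrow> \<phi>' x = 0"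
    "\<And>x. vector_derivative \<phi> (at x) = \<phi>' x"
    by (rule test_funD[OF t]) blast
  have cF: "continuous_on UNIV F"
    using F(1) by (rule cont_of_deriv)
  have d: "((\<lambda>x. F x * \<phi> x) has_vector_derivative (F x * \<phi>' x + F' x * \<phi> x)) (at x)" for x
    by (intro has_vector_derivative_mult F p)
  have i1: "integrable lborel (\<lambda>x. F x * \<phi>' x)"
    by (rule integrable_cont_compact[where R=R]) (use p cF in \<open>auto intro!: continuous_intros\<close>)
  have i2: "integrable lborel (\<lambda>x. F' x * \<phi> x)"
    by (rule integrable_cont_compact[where R=R]) (use p F in \<open>auto intro!: continuous_intros\<close>)
  have "(LINT x|lborel. F x * \<phi>' x + F' x * \<phi> x) = 0"
    by (rule ftc_zero(2)[OF d, where R=R]) (use p cF F in \<open>auto intro!: continuous_intros\<close>)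
  then show ?thesis using i1 i2 by (simp add: p(8) add_eq_0_iff)
qed


lemma gauss_integrable:
  assumes a: "a > 0" shows "integrable lborel (\<lambda>x::real. x ^ m * exp (- a * x\<^sup>2))"
proof -
  define \<sigma> where "\<sigma> = sqrt (1 / (2 * a))"
  have s: "\<sigma> > 0" using a by (simp add: \<sigma>_def)
  have s2: "2 * \<sigma>\<^sup>2 = 1 / a" using a by (simp add: \<sigma>_def)
  have "integrable lborel (\<lambda>x. normal_density 0 \<sigma> x * (x - 0) ^ m)"
    by (rule integrable_normal_moment[OF s])
  then have "integrable lborel (\<lambda>x. sqrt (2 * pi * \<sigma>\<^sup>2) * (normal_density 0 \<sigma> x * (x - 0) ^ m))"
    by (rule integrable_mult_right)
  moreover have "sqrt (2 * pi * \<sigma>\<^sup>2) * (normal_density 0 \<sigma> x * (x - 0) ^ m) = x ^ m * exp (- a * x\<^sup>2)" for x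
  proof -
    have "sqrt (2 * pi * \<sigma>\<^sup>2) > 0" using s by simp
    moreover have "- x\<^sup>2 / (2 * \<sigma>\<^sup>2) = - a * x\<^sup>2" using s2 a by simp
    ultimately show ?thesis using s by (simp add: normal_density_def)
  qed
  then have "(\<lambda>x. sqrt (2 * pi * \<sigma>\<^sup>2) * (normal_density 0 \<sigma> x * (x - 0) ^ m)) = (\<lambda>x. x ^ m * exp (- a * x\<^sup>2))"
    by (rule ext)
  ultimately show ?thesis by (simp only:)
qed

definition ebas :: "nat \<Rightarrow> real \<Rightarrow> nat \<Rightarrow> real \<Rightarrow> real" where
  "ebas p a k x = x ^ (2 * k + p) * exp (- a * x\<^sup>2 / 2)"

lemma L2_ebas: assumes "a > 0" shows "L2 (\<lambda>x. complex_of_real (ebas p a k x))"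
  unfolding L2_def
proof
  show "(\<lambda>x. complex_of_real (ebas p a k x)) \<in> borel_measurable lborel"
    unfolding ebas_def by measurable
  have "(cmod (complex_of_real (ebas p a k x)))\<^sup>2 = x ^ (2 * (2 * k + p)) * exp (- a * x\<^sup>2)" for x
  proof -
    have "(cmod (complex_of_real (ebas p a k x)))\<^sup>2 = (ebas p a k x)\<^sup>2" by simp
    also have "\<dots> = (x ^ (2 * k + p))\<^sup>2 * (exp (- a * x\<^sup>2 / 2))\<^sup>2" by (simp add: ebas_def power_mult_distrib)
    also have "(exp (- a * x\<^sup>2 / 2))\<^sup>2 = exp (- a * x\<^sup>2)" by (simp add: power2_eq_square exp_add[symmetric])
    finally show ?thesis by (simp add: power_mult[symmetric] mult.commute)
  qed
  then show "integrable lborel (\<lambda>x. (cmod (complex_of_real (ebas p a k x)))\<^sup>2)"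
    using gauss_integrable[OF assms, of "2 * (2 * k + p)"] by simp
qed

definition Ef :: "nat \<Rightarrow> (nat \<times> real) set \<Rightarrow> (nat \<times> real \<Rightarrow> nat \<Rightarrow> complex) \<Rightarrow> fn" where
  "Ef p F V x = (\<Sum>i\<in>F. \<Sum>k\<le>fst i. V i k * of_real (ebas p (snd i) k x))"

definition validF :: "(nat \<times> real) set \<Rightarrow> bool" where
  "validF F \<longleftrightarrow> finite F \<and> (\<forall>i\<in>F. snd i > 0)"

lemma L2_Ef: "validF F \<Longrightarrow> L2 (Ef p F V)"
  unfolding Ef_def validF_def
  by (intro L2_sum L2_cmult L2_ebas) auto

definition Tm :: "real \<Rightarrow> nat \<Rightarrow> (nat \<Rightarrow> complex) \<Rightarrow> nat \<Rightarrow> complex" where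
  "Tm a n v k = \<i> * of_real a * v k - (if k < n then 2 * \<i> * of_nat (Suc k) * v (Suc k) else 0)"

definition TV :: "(nat \<times> real \<Rightarrow> nat \<Rightarrow> complex) \<Rightarrow> nat \<times> real \<Rightarrow> nat \<Rightarrow> complex" where
  "TV V i = Tm (snd i) (fst i) (V i)"

lemma ebas_deriv:
  "((\<lambda>x. complex_of_real (ebas 0 a k x)) has_vector_derivative
      (of_real (2 * real k) * (if k = 0 then 0 else of_real (ebas 1 a (k - 1) x)) - of_real a * of_real (ebas 1 a k x))) (at x)"
proof -
  have "((\<lambda>x. x ^ (2 * k) * exp (- a * x\<^sup>2 / 2)) has_real_derivative
     (real (2 * k) * x ^ (2 * k - 1) * exp (- a * x\<^sup>2 / 2) + x ^ (2 * k) * (exp (- a * x\<^sup>2 / 2) * (- a * x)))) (at x)"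
    by (auto intro!: derivative_eq_intros simp: power2_eq_square field_simps)
  moreover have "real (2 * k) * x ^ (2 * k - 1) * exp (- a * x\<^sup>2 / 2) + x ^ (2 * k) * (exp (- a * x\<^sup>2 / 2) * (- a * x))
     = 2 * real k * (if k = 0 then 0 else ebas 1 a (k - 1) x) - a * ebas 1 a k x"
    by (cases k) (auto simp: ebas_def algebra_simps)
  ultimately have r0: "((\<lambda>x. x ^ (2 * k) * exp (- a * x\<^sup>2 / 2)) has_real_derivative
      (2 * real k * (if k = 0 then 0 else ebas 1 a (k - 1) x) - a * ebas 1 a k x)) (at x)"
    by (simp only:)
  have fe: "(\<lambda>x. x ^ (2 * k) * exp (- a * x\<^sup>2 / 2)) = ebas 0 a k"
    by (simp add: ebas_def fun_eq_iff)
  have r: "(ebas 0 a k has_real_derivative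
      (2 * real k * (if k = 0 then 0 else ebas 1 a (k - 1) x) - a * ebas 1 a k x)) (at x)"
    using r0 unfolding fe .
  have eq: "complex_of_real (2 * real k * (if k = 0 then 0 else ebas 1 a (k - 1) x) - a * ebas 1 a k x)
     = of_real (2 * real k) * (if k = 0 then 0 else of_real (ebas 1 a (k - 1) x)) - of_real a * of_real (ebas 1 a k x)"
    by (cases k) simp_all
  show ?thesis unfolding eq[symmetric] by (rule has_vector_derivative_of_real[OF r])
qed

lemma sum_shift_deriv:
  fixes h :: "nat \<Rightarrow> complex"
  shows "(\<Sum>k\<le>n. of_real (2 * real k) * (if k = 0 then 0 else h (k - 1)) * v k)
       = (\<Sum>k\<le>n. (if k < n then 2 * of_nat (Suc k) * v (Suc k) else 0) * h k)"
proof (cases n)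
  case 0 then show ?thesis by simp
next
  case (Suc m)
  have "(\<Sum>k\<le>Suc m. of_real (2 * real k) * (if k = 0 then 0 else h (k - 1)) * v k)
      = (\<Sum>k\<le>m. of_real (2 * real (Suc k)) * h k * v (Suc k))"
    by (subst sum.atMost_Suc_shift) simp
  also have "\<dots> = (\<Sum>k\<le>m. (if k < Suc m then 2 * of_nat (Suc k) * v (Suc k) else 0) * h k)"
    by (intro sum.cong) auto
  also have "\<dots> = (\<Sum>k\<le>Suc m. (if k < Suc m then 2 * of_nat (Suc k) * v (Suc k) else 0) * h k)"
    by simp
  finally show ?thesis using Suc by simp
qed

lemma Ef0_deriv:
  "(Ef 0 F V has_vector_derivative \<i> * Ef 1 F (TV V) x) (at x)"
proof -
  have d: "(Ef 0 F V has_vector_derivative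
     (\<Sum>i\<in>F. \<Sum>k\<le>fst i. V i k * (of_real (2 * real k) * (if k = 0 then 0 else of_real (ebas 1 (snd i) (k - 1) x))
        - of_real (snd i) * of_real (ebas 1 (snd i) k x)))) (at x)"
    unfolding Ef_def[abs_def]
    by (intro has_vector_derivative_sum has_vector_derivative_mult_right ebas_deriv)
  have "(\<Sum>k\<le>fst i. V i k * (of_real (2 * real k) * (if k = 0 then 0 else of_real (ebas 1 (snd i) (k - 1) x))
        - of_real (snd i) * of_real (ebas 1 (snd i) k x)))
      = \<i> * (\<Sum>k\<le>fst i. TV V i k * of_real (ebas 1 (snd i) k x))" for i
  proof -
    have "(\<Sum>k\<le>fst i. V i k * (of_real (2 * real k) * (if k = 0 then 0 else of_real (ebas 1 (snd i) (k - 1) x))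
        - of_real (snd i) * of_real (ebas 1 (snd i) k x)))
      = (\<Sum>k\<le>fst i. of_real (2 * real k) * (if k = 0 then 0 else of_real (ebas 1 (snd i) (k - 1) x)) * V i k)
        - (\<Sum>k\<le>fst i. of_real (snd i) * V i k * of_real (ebas 1 (snd i) k x))"
      by (simp add: sum_subtractf algebra_simps)
    also have "(\<Sum>k\<le>fst i. of_real (2 * real k) * (if k = 0 then 0 else of_real (ebas 1 (snd i) (k - 1) x)) * V i k)
       = (\<Sum>k\<le>fst i. (if k < fst i then 2 * of_nat (Suc k) * V i (Suc k) else 0) * of_real (ebas 1 (snd i) k x))"
      by (rule sum_shift_deriv[where h="\<lambda>k. of_real (ebas 1 (snd i) k x)"])
    also have "(\<Sum>k\<le>fst i. (if k < fst i then 2 * of_nat (Suc k) * V i (Suc k) else 0) * of_real (ebas 1 (snd i) k x))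
        - (\<Sum>k\<le>fst i. of_real (snd i) * V i k * of_real (ebas 1 (snd i) k x))
        = (\<Sum>k\<le>fst i. (if k < fst i then 2 * of_nat (Suc k) * V i (Suc k) else 0) * of_real (ebas 1 (snd i) k x)
        - of_real (snd i) * V i k * of_real (ebas 1 (snd i) k x))"
      by (simp only: sum_subtractf)
    also have "\<dots> = \<i> * (\<Sum>k\<le>fst i. TV V i k * of_real (ebas 1 (snd i) k x))"
      unfolding sum_distrib_left
      by (intro sum.cong refl) (auto simp: TV_def Tm_def algebra_simps)
    finally show ?thesis .
  qed
  then show ?thesis using d by (simp add: Ef_def sum_distrib_left)
qed

lemma Ef1_eq: "Ef 1 F V x = of_real x * Ef 0 F V x"
  by (simp add: Ef_def ebas_def sum_distrib_left algebra_simps)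

lemma Ef_even: "Ef 0 F V (- x) = Ef 0 F V x"
  by (simp add: Ef_def ebas_def)

lemma Ef_odd: "Ef 1 F V (- x) = - Ef 1 F V x"
  by (simp add: Ef_def ebas_def sum_negf[symmetric])

lemma cont_Ef: "continuous_on UNIV (Ef p F V)"
  unfolding Ef_def[abs_def] ebas_def by (auto intro!: continuous_intros)

lemma smooth_gauss_poly: "smooth (\<lambda>x. poly q (of_real x) * of_real (exp (- a * x\<^sup>2 / 2)))"
proof (rule smooth_coinduct[where P="\<lambda>h. \<exists>q. h = (\<lambda>x. poly q (of_real x) * of_real (exp (- a * x\<^sup>2 / 2)))"])
  fix h :: fn assume "\<exists>q. h = (\<lambda>x. poly q (of_real x) * of_real (exp (- a * x\<^sup>2 / 2)))"
  then obtain q where q: "h = (\<lambda>x. poly q (of_real x) * of_real (exp (- a * x\<^sup>2 / 2)))" by blast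
  have "(h has_vector_derivative poly (pderiv q - [:0, of_real a:] * q) (of_real x) * of_real (exp (- a * x\<^sup>2 / 2))) (at x)" for x
  proof -
    have d1: "((\<lambda>x. poly q (of_real x)) has_vector_derivative poly (pderiv q) (of_real x)) (at x)"
      by (rule has_vector_derivative_real_field) (rule poly_DERIV)
    have d2: "((\<lambda>x. complex_of_real (exp (- a * x\<^sup>2 / 2))) has_vector_derivative
        of_real (exp (- a * x\<^sup>2 / 2) * (- a * x))) (at x)"
      by (rule has_vector_derivative_of_real) (auto intro!: derivative_eq_intros simp: power2_eq_square field_simps)
    show ?thesis unfolding q
      using has_vector_derivative_mult[OF d1 d2]
      by (simp add: poly_diff algebra_simps)
  qed
  then show "\<exists>g'. (\<forall>x. (h has_vector_derivative g' x) (at x)) \<and> (\<exists>q. g' = (\<lambda>x. poly q (of_real x) * of_real (exp (- a * x\<^sup>2 / 2))))"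
    by (intro exI[of _ "\<lambda>x. poly (pderiv q - [:0, of_real a:] * q) (of_real x) * of_real (exp (- a * x\<^sup>2 / 2))"]) blast
qed blast

lemma smooth_Ef: "finite F \<Longrightarrow> smooth (Ef p F V)"
proof -
  assume F: "finite F"
  have "smooth (\<lambda>x. complex_of_real (ebas p a k x))" for a k
  proof -
    have "(\<lambda>x. complex_of_real (ebas p a k x)) = (\<lambda>x. poly (monom 1 (2 * k + p)) (of_real x) * of_real (exp (- a * x\<^sup>2 / 2)))"
      by (auto simp: ebas_def poly_monom fun_eq_iff)
    then show ?thesis using smooth_gauss_poly by simp
  qed
  then show ?thesis unfolding Ef_def[abs_def]
    using F by (intro smooth_sum smooth_cmult) auto
qed

lemma smooth_cnj: "smooth f \<Longrightarrow> smooth (\<lambda>x. cnj (f x))"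
proof (rule smooth_coinduct[where P="\<lambda>h. \<exists>g. smooth g \<and> h = (\<lambda>x. cnj (g x))"])
  fix h :: fn assume "\<exists>g. smooth g \<and> h = (\<lambda>x. cnj (g x))"
  then obtain g where g: "smooth g" "h = (\<lambda>x. cnj (g x))" by blast
  have "(h has_vector_derivative cnj (dv g x)) (at x)" for x
    unfolding g(2) by (rule bounded_linear.has_vector_derivative[OF bounded_linear_cnj dv(1)[OF g(1)]])
  then show "\<exists>g'. (\<forall>x. (h has_vector_derivative g' x) (at x)) \<and> (\<exists>g. smooth g \<and> g' = (\<lambda>x. cnj (g x)))"
    using dv(2)[OF g(1)] by (intro exI[of _ "\<lambda>x. cnj (dv g x)"]) blast
qed blast


lemma real_interval_zero_ae:
  fixes u :: "real \<Rightarrow> real"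
  assumes um[measurable]: "u \<in> borel_measurable borel"
  and int: "\<And>a b. integrable lborel (\<lambda>x. u x * indicator {a<..<b} x)"
  and zero: "\<And>a b. a < b \<Longrightarrow> (LINT x|lborel. u x * indicator {a<..<b} x) = 0"
  shows "AE x in lborel. u x = 0"
proof -
  have N: "AE x in lborel. \<bar>x\<bar> < real N \<longrightarrow> u x = 0" for N :: nat
  proof -
    define v where "v x = u x * indicator {-real N<..<real N} x" for x
    have vm[measurable]: "v \<in> borel_measurable borel" unfolding v_def by measurable
    have vi: "integrable lborel v" unfolding v_def by (rule int)
    have vt: "(LINT y|lborel. v y * indicator {x<..} y) = 0" for x
    proof (cases "max x (- real N) < real N")
      case True
      have "(\<lambda>y. v y * indicator {x<..} y) = (\<lambda>y. u y * indicator {max x (- real N)<..<real N} y)"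
        by (auto simp: v_def fun_eq_iff indicator_def)
      then show ?thesis using zero[OF True] by simp
    next
      case False
      then have "(\<lambda>y. v y * indicator {x<..} y) = (\<lambda>y. 0)"
        by (auto simp: v_def fun_eq_iff indicator_def)
      then show ?thesis by simp
    qed
    have ip: "integrable lborel (\<lambda>y. max 0 (v y) * indicator A y)" if "A \<in> sets borel" for A
      by (rule Bochner_Integration.integrable_bound[OF integrable_norm[OF vi]])
         (use that in \<open>auto simp: indicator_def\<close>)
    have im: "integrable lborel (\<lambda>y. max 0 (- v y) * indicator A y)" if "A \<in> sets borel" for A
      by (rule Bochner_Integration.integrable_bound[OF integrable_norm[OF vi]])
         (use that in \<open>auto simp: indicator_def\<close>)
    define M1 where "M1 = density lborel (\<lambda>x. ennreal (max 0 (v x)))"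
    define M2 where "M2 = density lborel (\<lambda>x. ennreal (max 0 (- v x)))"
    have e1: "emeasure M1 A = ennreal (LINT y|lborel. max 0 (v y) * indicator A y)" if "A \<in> sets borel" for A
    proof -
      have "emeasure M1 A = (\<integral>\<^sup>+ y. ennreal (max 0 (v y)) * indicator A y \<partial>lborel)"
        unfolding M1_def using that by (subst emeasure_density) auto
      also have "\<dots> = (\<integral>\<^sup>+ y. ennreal (max 0 (v y) * indicator A y) \<partial>lborel)"
        by (intro nn_integral_cong) (auto simp: indicator_def)
      also have "\<dots> = ennreal (LINT y|lborel. max 0 (v y) * indicator A y)"
        by (rule nn_integral_eq_integral[OF ip[OF that]]) auto
      finally show ?thesis .
    qed
    have e2: "emeasure M2 A = ennreal (LINT y|lborel. max 0 (- v y) * indicator A y)" if "A \<in> sets borel" for A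
    proof -
      have "emeasure M2 A = (\<integral>\<^sup>+ y. ennreal (max 0 (- v y)) * indicator A y \<partial>lborel)"
        unfolding M2_def using that by (subst emeasure_density) auto
      also have "\<dots> = (\<integral>\<^sup>+ y. ennreal (max 0 (- v y) * indicator A y) \<partial>lborel)"
        by (intro nn_integral_cong) (auto simp: indicator_def)
      also have "\<dots> = ennreal (LINT y|lborel. max 0 (- v y) * indicator A y)"
        by (rule nn_integral_eq_integral[OF im[OF that]]) auto
      finally show ?thesis .
    qed
    have "M1 = M2"
    proof (rule measure_eqI_lessThan)
      show "sets M1 = sets borel" "sets M2 = sets borel" by (simp_all add: M1_def M2_def)
      fix x :: real
      show "emeasure M1 {x<..} < \<infinity>" using e1[of "{x<..}"] by simp
      have "(LINT y|lborel. max 0 (v y) * indicator {x<..} y) - (LINT y|lborel. max 0 (- v y) * indicator {x<..} y)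
          = (LINT y|lborel. v y * indicator {x<..} y)"
      proof -
        have "(\<lambda>y. v y * indicator {x<..} y) = (\<lambda>y. max 0 (v y) * indicator {x<..} y - max 0 (- v y) * indicator {x<..} y)"
          by (auto simp: fun_eq_iff max_def indicator_def)
        then show ?thesis
          using Bochner_Integration.integral_diff[OF ip[of "{x<..}"] im[of "{x<..}"]] by simp
      qed
      then show "emeasure M1 {x<..} = emeasure M2 {x<..}"
        using e1[of "{x<..}"] e2[of "{x<..}"] vt[of x] by simp
    qed
    then have "AE y in lborel. ennreal (max 0 (v y)) = ennreal (max 0 (- v y))"
      unfolding M1_def M2_def by (intro sigma_finite_measure.density_unique[OF sigma_finite_lborel]) auto
    then have "AE y in lborel. v y = 0"
      by eventually_elim (auto simp: max_def split: if_splits)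
    then show ?thesis
      by eventually_elim (auto simp: v_def indicator_def)
  qed
  have "AE x in lborel. \<forall>N::nat. \<bar>x\<bar> < real N \<longrightarrow> u x = 0"
    using N by (subst AE_all_countable) auto
  then show ?thesis
  proof eventually_elim
    case (elim x)
    obtain N :: nat where "\<bar>x\<bar> < real N" using reals_Archimedean2 by blast
    then show ?case using elim by blast
  qed
qed

lemma smooth_cont: "smooth f \<Longrightarrow> continuous_on UNIV f"
  using dv(1) cont_of_deriv by blast

lemma smooth_meas: "smooth f \<Longrightarrow> f \<in> borel_measurable borel"
  using smooth_cont borel_measurable_continuous_onI by blast

lemma test_fun_L2: "test_fun \<phi> \<Longrightarrow> L2 \<phi>"
  unfolding test_fun_iff using smooth_cont L2_cont_compact by blast

definition Hc :: fn where "Hc x = complex_of_real (hst x)"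

lemma smooth_Hc: "smooth Hc"
  using smooth_hst unfolding Hc_def[abs_def] .

lemma Hc_0: "x \<le> 0 \<Longrightarrow> Hc x = 0" by (simp add: Hc_def hst_0)
lemma Hc_1: "x \<ge> 1 \<Longrightarrow> Hc x = 1" by (simp add: Hc_def hst_1)
lemma Hc_norm: "norm (Hc x) \<le> 1" using hst_bounds[of x] by (simp add: Hc_def)

definition phiab :: "real \<Rightarrow> real \<Rightarrow> real \<Rightarrow> fn" where
  "phiab N a b x = Hc (N * x + (- N * a - 1)) * Hc ((- N) * x + (N * b - 1))"

lemma smooth_phiab: "smooth (phiab N a b)"
  unfolding phiab_def[abs_def] by (intro smooth_mult smooth_affine smooth_Hc)

lemma phiab_out: assumes "N > 0" "x \<le> a \<or> x \<ge> b" shows "phiab N a b x = 0"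
proof -
  have "N * x + (- N * a - 1) \<le> 0 \<or> (- N) * x + (N * b - 1) \<le> 0"
  proof (cases "x \<le> a")
    case True
    then have "N * x \<le> N * a" using assms(1) by (intro mult_left_mono) auto
    then show ?thesis by auto
  next
    case False
    then have "x \<ge> b" using assms(2) by auto
    then have "N * b \<le> N * x" using assms(1) by (intro mult_left_mono) auto
    then show ?thesis by auto
  qed
  then show ?thesis by (auto simp: phiab_def Hc_0)
qed

lemma phiab_norm: "norm (phiab N a b x) \<le> 1"
  unfolding phiab_def norm_mult using Hc_norm by (intro mult_le_one) auto

lemma test_phiab: assumes "N > 0" shows "test_fun (phiab N a b)"
  unfolding test_fun_iff
proof (intro conjI smooth_phiab exI allI impI)
  fix x assume "\<bar>x\<bar> > \<bar>a\<bar> + \<bar>b\<bar>"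
  then have "x \<le> a \<or> x \<ge> b" by auto
  then show "phiab N a b x = 0" by (rule phiab_out[OF assms])
qed

lemma phiab_near0:
  assumes N: "N > 0" and ab: "0 \<le> a \<or> b \<le> 0" and x: "\<bar>x\<bar> < 1 / N"
  shows "phiab N a b x = 0"
proof -
  have Nx: "N * \<bar>x\<bar> < 1" using x N by (simp add: field_simps)
  have "\<bar>N * x\<bar> < 1" using Nx N by (simp add: abs_mult)
  then have "N * x + (- N * a - 1) \<le> 0 \<or> (- N) * x + (N * b - 1) \<le> 0"
  proof (cases "0 \<le> a")
    case True
    then have "N * a \<ge> 0" using N by simp
    with \<open>\<bar>N * x\<bar> < 1\<close> show ?thesis by auto
  next
    case False
    then have "b \<le> 0" using ab by auto
    then have "N * b \<le> 0" using N by (simp add: mult_nonneg_nonpos)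
    with \<open>\<bar>N * x\<bar> < 1\<close> show ?thesis by auto
  qed
  then show ?thesis by (auto simp: phiab_def Hc_0)
qed

lemma phiab_lim:
  assumes "a < b"
  shows "(\<lambda>n. phiab (real n + 1) a b x) \<longlonglongrightarrow> of_real (indicator {a<..<b} x)"
proof (cases "a < x \<and> x < b")
  case True
  obtain n0 :: nat where n0: "real n0 > 2 / (x - a) + 2 / (b - x)" using reals_Archimedean2 by blast
  have "eventually (\<lambda>n. phiab (real n + 1) a b x = 1) sequentially"
    unfolding eventually_sequentially
  proof (intro exI[of _ n0] allI impI)
    fix n assume "n0 \<le> n"
    then have n: "real n + 1 > 2 / (x - a) + 2 / (b - x)" using n0 by linarith
    have p1: "2 / (x - a) > 0" "2 / (b - x) > 0" using True by auto
    have "(real n + 1) * (x - a) \<ge> 2"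
    proof -
      have "real n + 1 \<ge> 2 / (x - a)" using n p1 by linarith
      then show ?thesis using True by (simp add: field_simps)
    qed
    moreover have "(real n + 1) * (b - x) \<ge> 2"
    proof -
      have "real n + 1 \<ge> 2 / (b - x)" using n p1 by linarith
      then show ?thesis using True by (simp add: field_simps)
    qed
    ultimately have "(real n + 1) * x + (- (real n + 1) * a - 1) \<ge> 1" "(- (real n + 1)) * x + ((real n + 1) * b - 1) \<ge> 1"
      by (simp_all add: algebra_simps)
    then show "phiab (real n + 1) a b x = 1" by (simp add: phiab_def Hc_1)
  qed
  then have "(\<lambda>n. phiab (real n + 1) a b x) \<longlonglongrightarrow> 1"
    by (rule tendsto_eventually)
  then show ?thesis using True by simp
next
  case False
  then have "phiab (real n + 1) a b x = 0" for n
    by (intro phiab_out) auto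
  then show ?thesis using False by simp
qed

lemma L2_indicator: "L2 (\<lambda>x. complex_of_real (indicator {a..b} x))"
  unfolding L2_def
proof
  show "(\<lambda>x. complex_of_real (indicator {a..b} x)) \<in> borel_measurable lborel" by measurable
  have "(\<lambda>x. (cmod (complex_of_real (indicator {a..b} x)))\<^sup>2) = (\<lambda>x. indicator {a..b} x *\<^sub>R (1::real))"
    by (auto simp: fun_eq_iff indicator_def)
  moreover have "integrable lborel (\<lambda>x. indicator {a..b} x *\<^sub>R (1::real))"
    by (rule borel_integrable_compact) auto
  ultimately show "integrable lborel (\<lambda>x. (cmod (complex_of_real (indicator {a..b} x)))\<^sup>2)" by simp
qed

lemma L2_indicator_open: "L2 (\<lambda>x. complex_of_real (indicator {a<..<b} x))"
  unfolding L2_def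
proof
  show "(\<lambda>x. complex_of_real (indicator {a<..<b} x)) \<in> borel_measurable lborel" by measurable
  have "integrable lborel (\<lambda>x. indicator {a..b} x *\<^sub>R (1::real))"
    by (rule borel_integrable_compact) auto
  then show "integrable lborel (\<lambda>x. (cmod (complex_of_real (indicator {a<..<b} x)))\<^sup>2)"
    by (rule Bochner_Integration.integrable_bound) (auto simp: indicator_def)
qed

lemma fund_interval:
  assumes w: "L2 w"
    and H: "\<And>\<phi>. test_fun \<phi> \<Longrightarrow> (\<exists>\<delta>>0. \<forall>x. \<bar>x\<bar> < \<delta> \<longrightarrow> \<phi> x = 0) \<Longrightarrow> (LINT x|lborel. w x * \<phi> x) = 0"
    and ab: "a < b" "0 \<le> a \<or> b \<le> 0"
  shows "(LINT x|lborel. w x * of_real (indicator {a<..<b} x)) = 0"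
proof -
  define h where "h x = w x * of_real (indicator {a..b} x)" for x
  have hi: "integrable lborel h" unfolding h_def by (rule L2_integrable_mult[OF w L2_indicator])
  have [measurable]: "w \<in> borel_measurable borel" using w by (simp add: L2_def)
  have hm[measurable]: "h \<in> borel_measurable borel" unfolding h_def by measurable
  have pm[measurable]: "phiab (real n + 1) a b \<in> borel_measurable borel" for n
    by (rule smooth_meas[OF smooth_phiab])
  have eqs: "(\<lambda>x. h x * phiab (real n + 1) a b x) = (\<lambda>x. w x * phiab (real n + 1) a b x)" for n
  proof
    fix x show "h x * phiab (real n + 1) a b x = w x * phiab (real n + 1) a b x"
      by (cases "a < x \<and> x < b") (auto simp: h_def indicator_def phiab_out)
  qed
  have z: "(LINT x|lborel. h x * phiab (real n + 1) a b x) = 0" for n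
    unfolding eqs
  proof (rule H[OF test_phiab])
    show "\<exists>\<delta>>0. \<forall>x. \<bar>x\<bar> < \<delta> \<longrightarrow> phiab (real n + 1) a b x = 0"
      by (rule exI[of _ "1 / (real n + 1)"]) (auto intro!: phiab_near0 ab)
  qed auto
  have "(\<lambda>n. LINT x|lborel. h x * phiab (real n + 1) a b x) \<longlonglongrightarrow> (LINT x|lborel. h x * of_real (indicator {a<..<b} x))"
  proof (rule integral_dominated_convergence[where w="\<lambda>x. norm (h x)"])
    show "(\<lambda>x. h x * complex_of_real (indicator {a<..<b} x)) \<in> borel_measurable lborel" by measurable
    show "(\<lambda>x. h x * phiab (real n + 1) a b x) \<in> borel_measurable lborel" for n by measurable
    show "integrable lborel (\<lambda>x. norm (h x))" using hi by auto
    show "AE x in lborel. (\<lambda>n. h x * phiab (real n + 1) a b x) \<longlonglongrightarrow> h x * complex_of_real (indicator {a<..<b} x)"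
      by (intro AE_I2 tendsto_mult tendsto_const phiab_lim ab)
    show "AE x in lborel. norm (h x * phiab (real n + 1) a b x) \<le> norm (h x)" for n
      using phiab_norm by (intro AE_I2) (auto simp: norm_mult intro!: mult_left_le)
  qed
  then have "(LINT x|lborel. h x * of_real (indicator {a<..<b} x)) = 0"
    unfolding z using LIMSEQ_unique tendsto_const by metis
  moreover have "(\<lambda>x. h x * of_real (indicator {a<..<b} x)) = (\<lambda>x. w x * of_real (indicator {a<..<b} x))"
    by (auto simp: fun_eq_iff h_def indicator_def)
  ultimately show ?thesis by simp
qed

lemma fund_all:
  assumes w: "L2 w"
    and H: "\<And>\<phi>. test_fun \<phi> \<Longrightarrow> (\<exists>\<delta>>0. \<forall>x. \<bar>x\<bar> < \<delta> \<longrightarrow> \<phi> x = 0) \<Longrightarrow> (LINT x|lborel. w x * \<phi> x) = 0"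
    and ab: "a < b"
  shows "(LINT x|lborel. w x * of_real (indicator {a<..<b} x)) = 0"
proof (cases "0 \<le> a \<or> b \<le> 0")
  case True then show ?thesis using fund_interval[OF w H ab True] by simp
next
  case False
  then have a0: "a < 0" and b0: "0 < b" by auto
  have i1: "integrable lborel (\<lambda>x. w x * of_real (indicator {a<..<0} x))"
    by (rule L2_integrable_mult[OF w L2_indicator_open])
  have i2: "integrable lborel (\<lambda>x. w x * of_real (indicator {0<..<b} x))"
    by (rule L2_integrable_mult[OF w L2_indicator_open])
  have [measurable]: "w \<in> borel_measurable borel" using w by (simp add: L2_def)
  have "(LINT x|lborel. w x * of_real (indicator {a<..<b} x))
      = (LINT x|lborel. w x * of_real (indicator {a<..<0} x) + w x * of_real (indicator {0<..<b} x))"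
  proof (rule integral_cong_AE)
    show "AE x in lborel. w x * of_real (indicator {a<..<b} x) = w x * of_real (indicator {a<..<0} x) + w x * of_real (indicator {0<..<b} x)"
      using AE_lborel_singleton[of 0] by eventually_elim (use a0 b0 in \<open>auto simp: indicator_def\<close>)
  qed measurable
  also have "\<dots> = 0"
    using fund_interval[OF w H a0] fund_interval[OF w H b0] i1 i2 by simp
  finally show ?thesis .
qed

lemma fundamental:
  assumes w: "L2 w"
    and H: "\<And>\<phi>. test_fun \<phi> \<Longrightarrow> (\<exists>\<delta>>0. \<forall>x. \<bar>x\<bar> < \<delta> \<longrightarrow> \<phi> x = 0) \<Longrightarrow> (LINT x|lborel. w x * \<phi> x) = 0"
  shows "AE x in lborel. w x = 0"
proof -
  have [measurable]: "w \<in> borel_measurable borel" using w by (simp add: L2_def)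
  have int: "integrable lborel (\<lambda>x. w x * of_real (indicator {a<..<b} x))" for a b
    by (rule L2_integrable_mult[OF w L2_indicator_open])
  have "AE x in lborel. Re (w x) = 0"
  proof (rule real_interval_zero_ae)
    show "(\<lambda>x. Re (w x)) \<in> borel_measurable borel" by measurable
    fix a b :: real
    have e: "(\<lambda>x. Re (w x) * indicator {a<..<b} x) = (\<lambda>x. Re (w x * of_real (indicator {a<..<b} x)))"
      by (auto simp: fun_eq_iff)
    show "integrable lborel (\<lambda>x. Re (w x) * indicator {a<..<b} x)"
      unfolding e by (rule integrable_Re[OF int])
    assume "a < b"
    then show "(LINT x|lborel. Re (w x) * indicator {a<..<b} x) = 0"
    proof -
      assume ab: "a < b"
      have "(LINT x|lborel. Re (w x * of_real (indicator {a<..<b} x))) = Re (LINT x|lborel. w x * of_real (indicator {a<..<b} x))"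
        by (rule integral_Re[OF int])
      then have "(LINT x|lborel. Re (w x * of_real (indicator {a<..<b} x))) = 0"
        using fund_all[OF w H ab] by simp
      then show ?thesis unfolding e .
    qed
  qed
  moreover have "AE x in lborel. Im (w x) = 0"
  proof (rule real_interval_zero_ae)
    show "(\<lambda>x. Im (w x)) \<in> borel_measurable borel" by measurable
    fix a b :: real
    have e: "(\<lambda>x. Im (w x) * indicator {a<..<b} x) = (\<lambda>x. Im (w x * of_real (indicator {a<..<b} x)))"
      by (auto simp: fun_eq_iff)
    show "integrable lborel (\<lambda>x. Im (w x) * indicator {a<..<b} x)"
      unfolding e by (rule integrable_Im[OF int])
    assume "a < b"
    then show "(LINT x|lborel. Im (w x) * indicator {a<..<b} x) = 0"
    proof -
      assume ab: "a < b"
      have "(LINT x|lborel. Im (w x * of_real (indicator {a<..<b} x))) = Im (LINT x|lborel. w x * of_real (indicator {a<..<b} x))"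
        by (rule integral_Im[OF int])
      then have "(LINT x|lborel. Im (w x * of_real (indicator {a<..<b} x))) = 0"
        using fund_all[OF w H ab] by simp
      then show ?thesis unfolding e .
    qed
  qed
  ultimately show ?thesis by eventually_elim (simp add: complex_eq_iff)
qed

lemma test_fun_deriv_meas:
  assumes "test_fun \<phi>" shows "(\<lambda>x. vector_derivative \<phi> (at x)) \<in> borel_measurable borel"
proof -
  obtain \<phi>' R where p: "\<And>x. (\<phi> has_vector_derivative \<phi>' x) (at x)" "smooth \<phi>" "smooth \<phi>'"
    "continuous_on UNIV \<phi>" "continuous_on UNIV \<phi>'"
    "\<And>x. \<bar>x\<bar> > R \<Longrightarrow> \<phi> x = 0" "\<And>x. \<bar>x\<bar> > R \<Longrightarrow> \<phi>' x = 0"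
    "\<And>x. vector_derivative \<phi> (at x) = \<phi>' x"
    by (rule test_funD[OF assms]) blast
  show ?thesis unfolding p(8) using p(3) by (rule smooth_meas)
qed

lemma weak_deriv_unique:
  assumes "weak_deriv f g" "weak_deriv f' g'" "AE x in lborel. f x = f' x"
  shows "AE x in lborel. g x = g' x"
proof -
  have L: "L2 f" "L2 g" "L2 f'" "L2 g'" using assms unfolding weak_deriv_def by auto
  have "AE x in lborel. g x - g' x = 0"
  proof (rule fundamental[OF L2_minus[OF L(2) L(4)]])
    fix \<phi> assume t: "test_fun \<phi>"
    have [measurable]: "f \<in> borel_measurable borel" "f' \<in> borel_measurable borel" using L by (auto simp: L2_def)
    have [measurable]: "(\<lambda>x. vector_derivative \<phi> (at x)) \<in> borel_measurable borel"
      by (rule test_fun_deriv_meas[OF t])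
    have "(LINT x|lborel. f x * vector_derivative \<phi> (at x)) = (LINT x|lborel. f' x * vector_derivative \<phi> (at x))"
      by (rule integral_cong_AE) (use assms(3) in \<open>auto elim!: eventually_mono\<close>)
    then have "(LINT x|lborel. g x * \<phi> x) = (LINT x|lborel. g' x * \<phi> x)"
      using assms(1,2) t unfolding weak_deriv_def by auto
    moreover have "integrable lborel (\<lambda>x. g x * \<phi> x)" "integrable lborel (\<lambda>x. g' x * \<phi> x)"
      using L2_integrable_mult[OF L(2) test_fun_L2[OF t]] L2_integrable_mult[OF L(4) test_fun_L2[OF t]] by auto
    ultimately show "(LINT x|lborel. (g x - g' x) * \<phi> x) = 0"
      by (simp add: left_diff_distrib)
  qed
  then show ?thesis by auto
qed


lemma affine_deriv:
  assumes "smooth g"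
  shows "((\<lambda>x. g (c * x + d)) has_vector_derivative of_real c * dv g (c * x + d)) (at x)"
proof -
  have "((g \<circ> (\<lambda>x. c * x + d)) has_vector_derivative (c *\<^sub>R dv g (c * x + d))) (at x)"
    by (rule vector_diff_chain_at) (auto intro!: derivative_eq_intros dv assms simp: has_real_derivative_iff_has_vector_derivative[symmetric])
  then show ?thesis by (simp add: o_def scaleR_conv_of_real)
qed

lemma Hd_zero: assumes "x < 0 \<or> x > 1" shows "dv Hc x = 0"
proof (cases "x < 0")
  case True
  have "((\<lambda>y. 0) has_vector_derivative 0) (at x)" by simp
  then have "(Hc has_vector_derivative 0) (at x)"
    by (rule has_vector_derivative_transform_within_open[where S="{..<0}"]) (use True in \<open>auto simp: Hc_0\<close>)
  then show ?thesis using dv(1)[OF smooth_Hc] vector_derivative_unique_at by blast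
next
  case False
  then have x1: "x > 1" using assms by auto
  have "((\<lambda>y. 1) has_vector_derivative 0) (at x)" by simp
  then have "(Hc has_vector_derivative 0) (at x)"
    by (rule has_vector_derivative_transform_within_open[where S="{1<..}"]) (use x1 in \<open>auto simp: Hc_1\<close>)
  then show ?thesis using dv(1)[OF smooth_Hc] vector_derivative_unique_at by blast
qed

lemma Hd_bound: obtains B where "B \<ge> 0" "\<And>x. norm (dv Hc x) \<le> B"
proof -
  have c: "continuous_on {0..1} (dv Hc)"
    using smooth_cont[OF dv(2)[OF smooth_Hc]] by (rule continuous_on_subset) auto
  have "compact (dv Hc ` {0..1})" by (rule compact_continuous_image[OF c]) auto
  then obtain B where B: "\<And>y. y \<in> dv Hc ` {0..1} \<Longrightarrow> norm y \<le> B"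
    using compact_imp_bounded bounded_iff by metis
  have "dv Hc 0 \<in> dv Hc ` {0..1}" by auto
  then have B0: "B \<ge> 0" using B[of "dv Hc 0"] norm_ge_zero[of "dv Hc 0"] by linarith
  have "norm (dv Hc x) \<le> B" for x
  proof (cases "x < 0 \<or> x > 1")
    case True then show ?thesis using Hd_zero B0 by simp
  next
    case False then show ?thesis using B by auto
  qed
  then show ?thesis using that B0 by blast
qed

definition chi :: "real \<Rightarrow> fn" where
  "chi R x = Hc ((1/R) * x + 2) * Hc ((-1/R) * x + 2)"

definition chid :: "real \<Rightarrow> fn" where
  "chid R x = Hc ((1/R) * x + 2) * (of_real (-1/R) * dv Hc ((-1/R) * x + 2))
     + of_real (1/R) * dv Hc ((1/R) * x + 2) * Hc ((-1/R) * x + 2)"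

lemma chi_deriv: "(chi R has_vector_derivative chid R x) (at x)"
  unfolding chi_def[abs_def] chid_def
  by (intro has_vector_derivative_mult affine_deriv smooth_Hc)

lemma smooth_chi: "smooth (chi R)"
  unfolding chi_def[abs_def] by (intro smooth_mult smooth_affine smooth_Hc)

lemma smooth_chid: "smooth (chid R)"
  using smooth_deriv'[OF smooth_chi chi_deriv] .

lemma chi_norm: "norm (chi R x) \<le> 1"
  unfolding chi_def norm_mult using Hc_norm by (intro mult_le_one) auto

lemma chi_one: assumes "R > 0" "\<bar>x\<bar> \<le> R" shows "chi R x = 1"
proof -
  have "x / R \<le> 1" "- 1 \<le> x / R" using assms by (auto simp: field_simps)
  then have h: "1 \<le> (1/R) * x + 2" "1 \<le> (-1/R) * x + 2" by auto
  show ?thesis using Hc_1[OF h(1)] Hc_1[OF h(2)] unfolding chi_def by simp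
qed

lemma chi_zero: assumes "R > 0" "\<bar>x\<bar> > 2 * R" shows "chi R x = 0"
proof -
  have "x / R > 2 \<or> x / R < - 2" using assms by (auto simp: field_simps abs_if split: if_splits)
  then have "(-1/R) * x + 2 \<le> 0 \<or> (1/R) * x + 2 \<le> 0" by auto
  then show ?thesis unfolding chi_def using Hc_0 by auto
qed

lemma chid_norm: assumes "R > 0" "\<And>x. norm (dv Hc x) \<le> B" "B \<ge> 0" shows "norm (chid R x) \<le> 2 * B / R"
proof -
  have "norm (chid R x) \<le> norm (Hc ((1/R) * x + 2) * (of_real (-1/R) * dv Hc ((-1/R) * x + 2)))
     + norm (of_real (1/R) * dv Hc ((1/R) * x + 2) * Hc ((-1/R) * x + 2))"
    unfolding chid_def by (rule norm_triangle_ineq)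
  also have "\<dots> \<le> 1 * ((1/R) * B) + (1/R) * B * 1"
    unfolding norm_mult using assms Hc_norm
    by (intro add_mono mult_mono) (auto simp: abs_if norm_divide)
  finally show ?thesis by simp
qed

lemma dct_lemma:
  fixes h :: fn and c :: "nat \<Rightarrow> fn"
  assumes h: "integrable lborel h" and c: "\<And>n. c n \<in> borel_measurable borel"
    and K: "\<And>n x. norm (c n x) \<le> K" and l: "\<And>x. (\<lambda>n. c n x) \<longlonglongrightarrow> l x"
    and lm: "l \<in> borel_measurable borel"
  shows "(\<lambda>n. LINT x|lborel. h x * c n x) \<longlonglongrightarrow> (LINT x|lborel. h x * l x)"
    and "\<And>n. integrable lborel (\<lambda>x. h x * c n x)"
proof -
  have [measurable]: "h \<in> borel_measurable borel" using h by auto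
  note [measurable] = c lm
  have w: "integrable lborel (\<lambda>x. K * norm (h x))" using h by auto
  have lim: "AE x in lborel. (\<lambda>n. h x * c n x) \<longlonglongrightarrow> h x * l x"
    by (intro AE_I2 tendsto_mult tendsto_const l)
  have bd: "AE x in lborel. norm (h x * c n x) \<le> K * norm (h x)" for n
  proof (intro AE_I2)
    fix x
    have "norm (h x) * norm (c n x) \<le> norm (h x) * K" by (rule mult_left_mono[OF K]) simp
    then show "norm (h x * c n x) \<le> K * norm (h x)" by (simp add: norm_mult mult.commute)
  qed
  show "(\<lambda>n. LINT x|lborel. h x * c n x) \<longlonglongrightarrow> (LINT x|lborel. h x * l x)"
    by (rule integral_dominated_convergence[OF _ _ w lim bd]) auto
  show "integrable lborel (\<lambda>x. h x * c n x)" for n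
    by (rule integrable_dominated_convergence2[OF _ _ w lim bd]) auto
qed

lemma ibp_schwartz:
  assumes wd: "weak_deriv f g" and s\<psi>: "smooth \<psi>" and d\<psi>: "\<And>x. (\<psi> has_vector_derivative \<psi>' x) (at x)"
    and L\<psi>: "L2 \<psi>" "L2 \<psi>'"
  shows "(LINT x|lborel. g x * \<psi> x) = - (LINT x|lborel. f x * \<psi>' x)"
proof -
  obtain B where B: "B \<ge> 0" "\<And>x. norm (dv Hc x) \<le> B" using Hd_bound by blast
  define Rn where "Rn n = real n + 1" for n :: nat
  have Rn: "Rn n > 0" "Rn n \<ge> 1" for n by (auto simp: Rn_def)
  have Lf: "L2 f" "L2 g" using wd by (auto simp: weak_deriv_def)
  have s\<psi>': "smooth \<psi>'" using smooth_deriv'[OF s\<psi> d\<psi>] .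
  have [measurable]: "\<psi> \<in> borel_measurable borel" "\<psi>' \<in> borel_measurable borel"
    using smooth_meas s\<psi> s\<psi>' by auto
  have cm[measurable]: "chi (Rn n) \<in> borel_measurable borel" "chid (Rn n) \<in> borel_measurable borel" for n
    using smooth_meas smooth_chi smooth_chid by auto
  define \<phi> where "\<phi> n x = chi (Rn n) x * \<psi> x" for n x
  have d\<phi>: "(\<phi> n has_vector_derivative (chi (Rn n) x * \<psi>' x + chid (Rn n) x * \<psi> x)) (at x)" for n x
    unfolding \<phi>_def[abs_def] by (intro has_vector_derivative_mult chi_deriv d\<psi>)
  have t\<phi>: "test_fun (\<phi> n)" for n
    unfolding test_fun_iff
  proof (intro conjI exI allI impI)
    show "smooth (\<phi> n)" unfolding \<phi>_def[abs_def] by (intro smooth_mult smooth_chi s\<psi>)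
    fix x assume "2 * Rn n < \<bar>x\<bar>"
    then show "\<phi> n x = 0" unfolding \<phi>_def using chi_zero[OF Rn(1)] by simp
  qed
  have vd: "vector_derivative (\<phi> n) (at x) = chi (Rn n) x * \<psi>' x + chid (Rn n) x * \<psi> x" for n x
    using d\<phi> vector_derivative_at by blast
  have eq: "(LINT x|lborel. f x * (chi (Rn n) x * \<psi>' x + chid (Rn n) x * \<psi> x)) = - (LINT x|lborel. g x * \<phi> n x)" for n
  proof -
    have "(LINT x|lborel. f x * vector_derivative (\<phi> n) (at x)) = - (LINT x|lborel. g x * \<phi> n x)"
      using wd t\<phi>[of n] unfolding weak_deriv_def by blast
    then show ?thesis unfolding vd .
  qed
  have ifp: "integrable lborel (\<lambda>x. f x * \<psi> x)" "integrable lborel (\<lambda>x. f x * \<psi>' x)" "integrable lborel (\<lambda>x. g x * \<psi> x)"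
    using L2_integrable_mult Lf L\<psi> by auto
  have lim1: "\<And>x. (\<lambda>n. chi (Rn n) x) \<longlonglongrightarrow> 1"
  proof -
    fix x
    obtain n0 :: nat where "real n0 \<ge> \<bar>x\<bar>" using real_arch_simple by blast
    then have "eventually (\<lambda>n. chi (Rn n) x = 1) sequentially"
      unfolding eventually_sequentially using Rn by (intro exI[of _ n0] allI impI chi_one) (auto simp: Rn_def)
    then show "(\<lambda>n. chi (Rn n) x) \<longlonglongrightarrow> 1" by (rule tendsto_eventually)
  qed
  have lim2: "\<And>x. (\<lambda>n. chid (Rn n) x) \<longlonglongrightarrow> 0"
  proof -
    fix x
    have "(\<lambda>n. 2 * B / Rn n) \<longlonglongrightarrow> 0"
      unfolding Rn_def using tendsto_mult[OF tendsto_const[of "2 * B"] LIMSEQ_inverse_real_of_nat]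
      by (simp add: divide_inverse add.commute)
    then show "(\<lambda>n. chid (Rn n) x) \<longlonglongrightarrow> 0"
      by (rule Lim_null_comparison[rotated]) (auto intro!: always_eventually chid_norm Rn B)
  qed
  have bRn: "2 * B / Rn n \<le> 2 * B" for n
  proof -
    have "2 * B * 1 \<le> 2 * B * Rn n" by (rule mult_left_mono) (use Rn B in auto)
    then show ?thesis using Rn(1)[of n] by (simp add: divide_le_eq mult.commute)
  qed
  have A: "(\<lambda>n. LINT x|lborel. (g x * \<psi> x) * chi (Rn n) x) \<longlonglongrightarrow> (LINT x|lborel. (g x * \<psi> x) * 1)"
    by (rule dct_lemma(1)[where K=1]) (use ifp chi_norm lim1 in auto)
  have Bc: "(\<lambda>n. LINT x|lborel. (f x * \<psi> x) * chid (Rn n) x) \<longlonglongrightarrow> (LINT x|lborel. (f x * \<psi> x) * 0)"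
    by (rule dct_lemma(1)[where K="2 * B"]) (use ifp lim2 in \<open>auto intro!: order.trans[OF chid_norm[OF Rn(1) B(2) B(1)] bRn]\<close>)
  have C: "(\<lambda>n. LINT x|lborel. (f x * \<psi>' x) * chi (Rn n) x) \<longlonglongrightarrow> (LINT x|lborel. (f x * \<psi>' x) * 1)"
    by (rule dct_lemma(1)[where K=1]) (use ifp chi_norm lim1 in auto)
  have iB: "integrable lborel (\<lambda>x. (f x * \<psi> x) * chid (Rn n) x)" for n
    by (rule dct_lemma(2)[where K="2 * B"]) (use ifp lim2 in \<open>auto intro!: order.trans[OF chid_norm[OF Rn(1) B(2) B(1)] bRn]\<close>)
  have iC: "integrable lborel (\<lambda>x. (f x * \<psi>' x) * chi (Rn n) x)" for n
    by (rule dct_lemma(2)[where K=1]) (use ifp chi_norm lim1 in auto)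
  have sum: "(LINT x|lborel. (f x * \<psi>' x) * chi (Rn n) x) + (LINT x|lborel. (f x * \<psi> x) * chid (Rn n) x)
      = - (LINT x|lborel. (g x * \<psi> x) * chi (Rn n) x)" for n
  proof -
    have "(LINT x|lborel. (f x * \<psi>' x) * chi (Rn n) x) + (LINT x|lborel. (f x * \<psi> x) * chid (Rn n) x)
        = (LINT x|lborel. f x * (chi (Rn n) x * \<psi>' x + chid (Rn n) x * \<psi> x))"
      using Bochner_Integration.integral_add[OF iC[of n] iB[of n]] by (simp add: algebra_simps)
    also have "\<dots> = - (LINT x|lborel. (g x * \<psi> x) * chi (Rn n) x)"
      unfolding eq \<phi>_def by (simp add: algebra_simps)
    finally show ?thesis .
  qed
  have "(\<lambda>n. (LINT x|lborel. (f x * \<psi>' x) * chi (Rn n) x) + (LINT x|lborel. (f x * \<psi> x) * chid (Rn n) x))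
      \<longlonglongrightarrow> (LINT x|lborel. (f x * \<psi>' x) * 1) + (LINT x|lborel. (f x * \<psi> x) * 0)"
    by (rule tendsto_add[OF C Bc])
  moreover have "(\<lambda>n. (LINT x|lborel. (f x * \<psi>' x) * chi (Rn n) x) + (LINT x|lborel. (f x * \<psi> x) * chid (Rn n) x))
      \<longlonglongrightarrow> - (LINT x|lborel. (g x * \<psi> x) * 1)"
    unfolding sum by (rule tendsto_minus[OF A])
  ultimately have "(LINT x|lborel. (f x * \<psi>' x) * 1) + (LINT x|lborel. (f x * \<psi> x) * 0) = - (LINT x|lborel. (g x * \<psi> x) * 1)"
    by (rule LIMSEQ_unique)
  then show ?thesis by simp
qed


lemma deriv_zero_inside:
  fixes f :: "real \<Rightarrow> 'b::real_normed_vector"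
  assumes "(f has_vector_derivative f') (at x)" "\<And>y. \<bar>y\<bar> < \<delta> \<Longrightarrow> f y = 0" "\<bar>x\<bar> < \<delta>"
  shows "f' = 0"
proof -
  have "((\<lambda>y. 0) has_vector_derivative 0) (at x)" by simp
  moreover have "open {y::real. \<bar>y\<bar> < \<delta>}"
    by (rule open_Collect_less) (auto intro: continuous_intros)
  ultimately have "(f has_vector_derivative 0) (at x)"
    by (rule has_vector_derivative_transform_within_open[where S="{y. \<bar>y\<bar> < \<delta>}"])
       (use assms in auto)
  then show ?thesis using assms(1) vector_derivative_unique_at by blast
qed

lemma t_rel_test:
  assumes t: "test_fun \<phi>" and d: "\<delta> > 0" "\<And>x. \<bar>x\<bar> < \<delta> \<Longrightarrow> \<phi> x = 0"
  shows "\<exists>k. t_rel \<phi> k"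
proof -
  obtain \<phi>' R where p: "\<And>x. (\<phi> has_vector_derivative \<phi>' x) (at x)" "smooth \<phi>" "smooth \<phi>'"
    "continuous_on UNIV \<phi>" "continuous_on UNIV \<phi>'"
    "\<And>x. \<bar>x\<bar> > R \<Longrightarrow> \<phi> x = 0" "\<And>x. \<bar>x\<bar> > R \<Longrightarrow> \<phi>' x = 0"
    "\<And>x. vector_derivative \<phi> (at x) = \<phi>' x"
    by (rule test_funD[OF t]) blast
  have z: "\<phi>' x = 0" if "\<bar>x\<bar> < \<delta>" for x
    using deriv_zero_inside[OF p(1) d(2) that] .
  have wd: "weak_deriv \<phi> \<phi>'"
    unfolding weak_deriv_def
  proof (intro conjI allI impI)
    show "L2 \<phi>" using L2_cont_compact[OF p(4) p(6)] .
    show "L2 \<phi>'" using L2_cont_compact[OF p(5) p(7)] .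
    fix \<psi> assume "test_fun \<psi>"
    then show "(LINT x|lborel. \<phi> x * vector_derivative \<psi> (at x)) = - (LINT x|lborel. \<phi>' x * \<psi> x)"
      by (rule ibp_test[OF p(1) p(5)])
  qed
  define q where "q x = - \<i> * \<phi>' x" for x
  define k where "k x = q x / of_real x" for x
  have cq: "continuous_on UNIV q" unfolding q_def[abs_def] using p(5) by (intro continuous_intros)
  have ck: "continuous_on UNIV k"
  proof (rule continuous_at_imp_continuous_on, intro ballI)
    fix x :: real
    show "isCont k x"
    proof (cases "\<bar>x\<bar> < \<delta>")
      case True
      have "eventually (\<lambda>y. k y = 0) (nhds x)"
      proof (rule eventually_nhds_in_open[THEN eventually_mono])
        show "open {y::real. \<bar>y\<bar> < \<delta>}" by (rule open_Collect_less) (auto intro: continuous_intros)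
        show "x \<in> {y. \<bar>y\<bar> < \<delta>}" using True by simp
      qed (auto simp: k_def q_def z)
      then show ?thesis using isCont_cong[of k "\<lambda>y. 0" x] by simp
    next
      case False
      then have x0: "x \<noteq> 0" using d by auto
      have "isCont q x" using cq by (simp add: continuous_on_eq_continuous_at)
      then show ?thesis unfolding k_def[abs_def] using x0 by (intro continuous_intros) auto
    qed
  qed
  have Lk: "L2 k"
    by (rule L2_cont_compact[OF ck, where R=R]) (simp add: k_def q_def p(7))
  have Lq: "L2 q" unfolding q_def[abs_def] by (rule L2_cmult[OF L2_cont_compact[OF p(5) p(7)]])
  have "t_rel \<phi> k"
    unfolding t_rel_def p_rel_def qinv_rel_def
    using wd Lk Lq by (intro exI[of _ q]) (auto simp: q_def k_def)
  then show ?thesis by blast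
qed

lemma adj_unique:
  assumes L: "L2 m1" "L2 m2" and H: "\<And>f k. t_rel f k \<Longrightarrow> l2_inner m1 f = l2_inner m2 f"
  shows "AE x in lborel. m1 x = m2 x"
proof -
  have "AE x in lborel. cnj (m1 x) - cnj (m2 x) = 0"
  proof (rule fundamental[OF L2_minus[OF L2_cnj[OF L(1)] L2_cnj[OF L(2)]]])
    fix \<phi> assume t: "test_fun \<phi>" and "\<exists>\<delta>>0. \<forall>x. \<bar>x\<bar> < \<delta> \<longrightarrow> \<phi> x = 0"
    then obtain \<delta> where d: "\<delta> > 0" "\<And>x. \<bar>x\<bar> < \<delta> \<Longrightarrow> \<phi> x = 0" by blast
    obtain k where "t_rel \<phi> k" using t_rel_test[OF t d] by blast
    then have e: "l2_inner m1 \<phi> = l2_inner m2 \<phi>" by (rule H)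
    have "integrable lborel (\<lambda>x. cnj (m1 x) * \<phi> x)" "integrable lborel (\<lambda>x. cnj (m2 x) * \<phi> x)"
      using L2_integrable_mult[OF L2_cnj[OF L(1)] test_fun_L2[OF t]]
        L2_integrable_mult[OF L2_cnj[OF L(2)] test_fun_L2[OF t]] by auto
    then show "(LINT x|lborel. (cnj (m1 x) - cnj (m2 x)) * \<phi> x) = 0"
      using e unfolding l2_inner_def by (simp add: left_diff_distrib)
  qed
  then show ?thesis by eventually_elim (metis complex_cnj_cancel_iff eq_iff_diff_eq_0)
qed

lemma Ef1_eq': "Ef (Suc 0) F V x = of_real x * Ef 0 F V x"
  using Ef1_eq[of F V x] by simp

lemma Ef_meas[measurable]: "Ef p F V \<in> borel_measurable borel"
  using cont_Ef borel_measurable_continuous_onI by blast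

lemma weak_deriv_Ef0: "validF F \<Longrightarrow> weak_deriv (Ef 0 F V) (\<lambda>x. \<i> * Ef 1 F (TV V) x)"
  unfolding weak_deriv_def
proof (intro conjI allI impI)
  assume F: "validF F"
  show "L2 (Ef 0 F V)" using L2_Ef[OF F] .
  show "L2 (\<lambda>x. \<i> * Ef 1 F (TV V) x)" by (rule L2_cmult[OF L2_Ef[OF F]])
  fix \<phi> assume t: "test_fun \<phi>"
  have d: "\<And>x. (Ef 0 F V has_vector_derivative (\<lambda>x. \<i> * Ef 1 F (TV V) x) x) (at x)"
    using Ef0_deriv by simp
  have c: "continuous_on UNIV (\<lambda>x. \<i> * Ef 1 F (TV V) x)" by (intro continuous_intros cont_Ef)
  show "(LINT x|lborel. Ef 0 F V x * vector_derivative \<phi> (at x)) = - (LINT x|lborel. \<i> * Ef 1 F (TV V) x * \<phi> x)"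
    using ibp_test[OF d c t] by simp
qed

lemma t_rel_Ef: assumes F: "validF F" shows "t_rel (Ef 0 F V) (Ef 0 F (TV V))"
  unfolding t_rel_def p_rel_def qinv_rel_def
proof (intro exI conjI)
  show "weak_deriv (Ef 0 F V) (\<lambda>x. \<i> * Ef 1 F (TV V) x)" by (rule weak_deriv_Ef0[OF F])
  show "AE x in lborel. Ef 1 F (TV V) x = - \<i> * (\<i> * Ef 1 F (TV V) x)" by simp
  show "AE x in lborel. Ef 0 F (TV V) x = Ef 1 F (TV V) x / complex_of_real x"
    using AE_lborel_singleton[of 0] by eventually_elim (simp add: Ef1_eq')
qed (use L2_Ef[OF F] in auto)

lemma t_rel_Ef_unique:
  assumes F: "validF F" and t: "t_rel f m" and ae: "AE x in lborel. f x = Ef 0 F V x"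
  shows "AE x in lborel. m x = Ef 0 F (TV V) x"
proof -
  obtain p g where pg: "weak_deriv f g" "AE x in lborel. p x = - \<i> * g x" "AE x in lborel. m x = p x / of_real x"
    using t unfolding t_rel_def p_rel_def qinv_rel_def by blast
  have "AE x in lborel. g x = \<i> * Ef 1 F (TV V) x"
    by (rule weak_deriv_unique[OF pg(1) weak_deriv_Ef0[OF F] ae])
  with pg(2,3) AE_lborel_singleton[of 0] show ?thesis
    by eventually_elim (simp add: Ef1_eq')
qed

lemma tadj_rel_Ef: assumes F: "validF F" shows "tadj_rel (Ef 1 F V) (Ef 1 F (TV V))"
  unfolding tadj_rel_def
proof (intro conjI allI impI)
  show "L2 (Ef 1 F V)" "L2 (Ef 1 F (TV V))" using L2_Ef[OF F] by auto
  fix f k assume "t_rel f k"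
  then obtain p g where pg: "weak_deriv f g" "AE x in lborel. p x = - \<i> * g x" "AE x in lborel. k x = p x / of_real x"
    "L2 p" "L2 k"
    unfolding t_rel_def p_rel_def qinv_rel_def by blast
  have Lf: "L2 f" "L2 g" using pg(1) unfolding weak_deriv_def by auto
  define \<psi> where "\<psi> x = cnj (Ef 0 F V x)" for x
  define \<psi>' where "\<psi>' x = cnj (\<i> * Ef 1 F (TV V) x)" for x
  have d\<psi>: "(\<psi> has_vector_derivative \<psi>' x) (at x)" for x
    unfolding \<psi>_def[abs_def] \<psi>'_def by (rule bounded_linear.has_vector_derivative[OF bounded_linear_cnj Ef0_deriv])
  have s\<psi>: "smooth \<psi>" unfolding \<psi>_def[abs_def] using F by (intro smooth_cnj smooth_Ef) (auto simp: validF_def)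
  have L\<psi>: "L2 \<psi>" "L2 \<psi>'" unfolding \<psi>_def[abs_def] \<psi>'_def[abs_def]
    by (intro L2_cnj L2_Ef L2_cmult F)+
  have ibp: "(LINT x|lborel. g x * \<psi> x) = - (LINT x|lborel. f x * \<psi>' x)"
    by (rule ibp_schwartz[OF pg(1) s\<psi> d\<psi> L\<psi>])
  have [measurable]: "k \<in> borel_measurable borel" "g \<in> borel_measurable borel" "f \<in> borel_measurable borel"
    using pg(5) Lf by (auto simp: L2_def)
  have "l2_inner (Ef 1 F V) k = (LINT x|lborel. - \<i> * (g x * \<psi> x))"
    unfolding l2_inner_def
  proof (rule integral_cong_AE)
    show "(\<lambda>x. - \<i> * (g x * \<psi> x)) \<in> borel_measurable lborel" unfolding \<psi>_def by measurable
    show "AE x in lborel. cnj (Ef 1 F V x) * k x = - \<i> * (g x * \<psi> x)"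
      using pg(2,3) AE_lborel_singleton[of 0] by eventually_elim (simp add: Ef1_eq' \<psi>_def)
  qed measurable
  also have "\<dots> = \<i> * (LINT x|lborel. f x * \<psi>' x)"
    using ibp by simp
  also have "\<dots> = l2_inner (Ef 1 F (TV V)) f"
    unfolding l2_inner_def \<psi>'_def by (simp add: algebra_simps)
  finally show "l2_inner (Ef 1 F V) k = l2_inner (Ef 1 F (TV V)) f" .
qed

lemma tadj_rel_Ef_unique:
  assumes F: "validF F" and t: "tadj_rel f m" and ae: "AE x in lborel. f x = Ef 1 F V x"
  shows "AE x in lborel. m x = Ef 1 F (TV V) x"
proof (rule adj_unique)
  show "L2 m" "L2 (Ef 1 F (TV V))" using t L2_Ef[OF F] unfolding tadj_rel_def by auto
  have Lf: "L2 f" using t unfolding tadj_rel_def by auto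
  fix f' k assume tk: "t_rel f' k"
  have Lk: "L2 k" using tk unfolding t_rel_def qinv_rel_def by auto
  have [measurable]: "f \<in> borel_measurable borel" "k \<in> borel_measurable borel" using Lf Lk by (auto simp: L2_def)
  have "l2_inner m f' = l2_inner f k" using t tk unfolding tadj_rel_def by auto
  also have "\<dots> = l2_inner (Ef 1 F V) k"
    unfolding l2_inner_def by (rule integral_cong_AE) (use ae in \<open>auto elim!: eventually_mono\<close>)
  also have "\<dots> = l2_inner (Ef 1 F (TV V)) f'"
    using tadj_rel_Ef[OF F] tk unfolding tadj_rel_def by auto
  finally show "l2_inner m f' = l2_inner (Ef 1 F (TV V)) f'" .
qed


definition cf :: "real \<Rightarrow> nat \<Rightarrow> real" where
  "cf \<epsilon> m = (-1)^m / real (2*m+1) * (sqrt \<epsilon>)^(2*m+1)"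

lemma good_eps: "eventually (\<lambda>\<epsilon>. 0 < \<epsilon> \<and> \<epsilon> * K\<^sup>2 \<le> 1/2) (at_right (0::real))"
proof -
  have K: "K\<^sup>2 \<ge> 0" by simp
  show ?thesis
    unfolding eventually_at_right_field
  proof (intro exI[of _ "1 / (2 * K\<^sup>2 + 2)"] conjI allI impI)
    show "(0::real) < 1 / (2 * K\<^sup>2 + 2)" using K by (simp add: add_nonneg_pos)
    fix y :: real assume y: "0 < y" "y < 1 / (2 * K\<^sup>2 + 2)"
    then show "0 < y" by simp
    from y have "y * (2 * K\<^sup>2 + 2) < 1" using K by (simp add: field_simps add_nonneg_pos)
    then show "y * K\<^sup>2 \<le> 1/2" using y(1) K by (auto simp: algebra_simps)
  qed
qed

lemma scalar_series:
  fixes x :: "nat \<Rightarrow> complex"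
  assumes X: "\<And>j. cmod (x j) \<le> C * K^j" and C: "C \<ge> 0" and K: "K \<ge> 0"
  shows "eventually (\<lambda>\<epsilon>. summable (\<lambda>m. of_real (cf \<epsilon> m) * x (2*m+1))) (at_right 0)"
    and "((\<lambda>\<epsilon>. of_real (1 / sqrt \<epsilon>) * (\<Sum>m. of_real (cf \<epsilon> m) * x (2*m+1))) \<longlongrightarrow> x 1) (at_right 0)"
proof -
  define b where "b \<epsilon> m = of_real ((-1)^m / real (2*m+1) * \<epsilon>^m) * x (2*m+1)" for \<epsilon> m
  have key: "summable (b \<epsilon>) \<and> summable (\<lambda>m. of_real (cf \<epsilon> m) * x (2*m+1))
      \<and> of_real (1 / sqrt \<epsilon>) * (\<Sum>m. of_real (cf \<epsilon> m) * x (2*m+1)) = (\<Sum>m. b \<epsilon> m)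
      \<and> cmod ((\<Sum>m. b \<epsilon> m) - x 1) \<le> 2 * C * K^3 * \<epsilon>"
    if e: "0 < \<epsilon>" "\<epsilon> * K\<^sup>2 \<le> 1/2" for \<epsilon>
  proof -
    define q where "q = \<epsilon> * K\<^sup>2"
    have q: "0 \<le> q" "q \<le> 1/2" using e by (auto simp: q_def)
    have bb: "cmod (b \<epsilon> m) \<le> C * K * q^m" for m
    proof -
      have n1: "cmod (b \<epsilon> m) = \<bar>(-1)^m / real (2*m+1) * \<epsilon>^m\<bar> * cmod (x (2*m+1))"
        unfolding b_def norm_mult norm_of_real ..
      have n2: "\<bar>(-1)^m / real (2*m+1) * \<epsilon>^m\<bar> = \<epsilon>^m / real (2*m+1)"
        using e by (simp add: abs_mult)
      have "cmod (b \<epsilon> m) = \<epsilon>^m / real (2*m+1) * cmod (x (2*m+1))"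
        unfolding n1 n2 ..
      also have "\<dots> \<le> \<epsilon>^m * (C * K^(2*m+1))"
      proof -
        have "\<epsilon>^m / real (2*m+1) \<le> \<epsilon>^m" using e by (simp add: divide_le_eq_1 field_simps)
        then show ?thesis using X[of "2*m+1"] e
          by (intro mult_mono) auto
      qed
      also have "\<dots> = C * K * q^m"
      proof -
        have a: "(\<epsilon> * K\<^sup>2)^m = \<epsilon>^m * K^(2*m)" by (simp add: power_mult_distrib power_mult)
        have b: "K^(2*m+1) = K^(2*m) * K" by simp
        show ?thesis unfolding q_def a b by (simp add: ac_simps)
      qed
      finally show ?thesis .
    qed
    have sg: "summable (\<lambda>m. C * K * q^m)" using q by (intro summable_mult summable_geometric) auto
    have sb: "summable (b \<epsilon>)" by (rule summable_comparison_test'[OF sg bb])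
    have sq: "(sqrt \<epsilon>)^(2*m+1) = sqrt \<epsilon> * \<epsilon>^m" for m
      using e by (simp add: power_add power_mult)
    have cfb: "of_real (cf \<epsilon> m) * x (2*m+1) = of_real (sqrt \<epsilon>) * b \<epsilon> m" for m
      unfolding cf_def b_def sq by (simp add: algebra_simps)
    have s2: "summable (\<lambda>m. of_real (cf \<epsilon> m) * x (2*m+1))"
      unfolding cfb by (rule summable_mult[OF sb])
    have eq: "of_real (1 / sqrt \<epsilon>) * (\<Sum>m. of_real (cf \<epsilon> m) * x (2*m+1)) = (\<Sum>m. b \<epsilon> m)"
      unfolding cfb suminf_mult[OF sb] using e by (simp add: field_simps)
    have sbs: "summable (\<lambda>m. b \<epsilon> (Suc m))" using sb by (simp add: summable_Suc_iff)
    have head: "(\<Sum>m. b \<epsilon> m) - x 1 = (\<Sum>m. b \<epsilon> (Suc m))"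
    proof -
      have "b \<epsilon> 0 = x 1" by (simp add: b_def)
      then show ?thesis using suminf_split_head[OF sb] by simp
    qed
    have sgs: "summable (\<lambda>m. C * K * q^(Suc m))" using sg by (auto simp: summable_Suc_iff)
    have "cmod (\<Sum>m. b \<epsilon> (Suc m)) \<le> (\<Sum>m. cmod (b \<epsilon> (Suc m)))"
    proof (rule summable_norm)
      show "summable (\<lambda>n. cmod (b \<epsilon> (Suc n)))"
        by (rule summable_comparison_test'[OF sgs, where N=0]) (simp only: real_norm_def abs_norm_cancel bb)
    qed
    also have "\<dots> \<le> (\<Sum>m. C * K * q^(Suc m))"
    proof (rule suminf_le)
      show "summable (\<lambda>n. cmod (b \<epsilon> (Suc n)))"
        by (rule summable_comparison_test'[OF sgs, where N=0]) (simp only: real_norm_def abs_norm_cancel bb)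
      show "\<And>n. cmod (b \<epsilon> (Suc n)) \<le> C * K * q ^ Suc n" by (rule bb)
    qed (rule sgs)
    also have "\<dots> = C * K * q / (1 - q)"
    proof -
      have "(\<Sum>m. C * K * q^(Suc m)) = (C * K * q) * (\<Sum>m. q^m)"
        using suminf_mult[of "\<lambda>m. q^m" "C * K * q"] summable_geometric[of q] q by (simp add: algebra_simps)
      then show ?thesis using suminf_geometric[of q] q by simp
    qed
    also have "\<dots> \<le> 2 * C * K^3 * \<epsilon>"
    proof -
      have "C * K * q / (1 - q) \<le> C * K * q / (1/2)"
        using q C K by (intro divide_left_mono mult_nonneg_nonneg) auto
      then show ?thesis by (simp add: q_def power2_eq_square power3_eq_cube algebra_simps)
    qed
    finally show ?thesis using sb s2 eq head by simp
  qed
  show "eventually (\<lambda>\<epsilon>. summable (\<lambda>m. of_real (cf \<epsilon> m) * x (2*m+1))) (at_right 0)"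
    using good_eps[of K] by eventually_elim (use key in blast)
  have "((\<lambda>\<epsilon>. of_real (1 / sqrt \<epsilon>) * (\<Sum>m. of_real (cf \<epsilon> m) * x (2*m+1)) - x 1) \<longlongrightarrow> 0) (at_right 0)"
  proof (rule Lim_null_comparison)
    show "eventually (\<lambda>\<epsilon>. norm (of_real (1 / sqrt \<epsilon>) * (\<Sum>m. of_real (cf \<epsilon> m) * x (2*m+1)) - x 1) \<le> 2 * C * K^3 * \<epsilon>) (at_right 0)"
      using good_eps[of K] by eventually_elim (use key in auto)
    have "((\<lambda>\<epsilon>::real. 2 * C * K^3 * \<epsilon>) \<longlongrightarrow> 2 * C * K^3 * 0) (at_right 0)"
      by (intro tendsto_intros)
    then show "((\<lambda>\<epsilon>::real. 2 * C * K^3 * \<epsilon>) \<longlongrightarrow> 0) (at_right 0)" by simp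
  qed
  then show "((\<lambda>\<epsilon>. of_real (1 / sqrt \<epsilon>) * (\<Sum>m. of_real (cf \<epsilon> m) * x (2*m+1))) \<longlongrightarrow> x 1) (at_right 0)"
    by (simp add: LIM_zero_iff)
qed

definition norm1 :: "nat \<Rightarrow> (nat \<Rightarrow> complex) \<Rightarrow> real" where
  "norm1 n v = (\<Sum>k\<le>n. cmod (v k))"

lemma comp_le_norm1: "k \<le> n \<Longrightarrow> cmod (v k) \<le> norm1 n v"
  unfolding norm1_def by (rule member_le_sum) auto

lemma norm1_nonneg: "norm1 n v \<ge> 0"
  unfolding norm1_def by (rule sum_nonneg) auto

lemma shift_sum_le:
  fixes f :: "nat \<Rightarrow> real"
  assumes "\<And>k. f k \<ge> 0"
  shows "(\<Sum>k\<le>n. (if k < n then f (Suc k) else 0)) \<le> (\<Sum>k\<le>n. f k)"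
proof (cases n)
  case 0 then show ?thesis using assms by simp
next
  case (Suc m)
  have "(\<Sum>k\<le>Suc m. (if k < Suc m then f (Suc k) else 0)) = (\<Sum>k\<le>m. f (Suc k))"
    by (simp add: sum.atMost_Suc)
  also have "\<dots> \<le> f 0 + (\<Sum>k\<le>m. f (Suc k))" using assms by simp
  also have "\<dots> = (\<Sum>k\<le>Suc m. f k)" by (rule sum.atMost_Suc_shift[symmetric])
  finally show ?thesis using Suc by simp
qed

lemma Tm_bound:
  assumes a: "a \<ge> 0"
  shows "norm1 n (Tm a n v) \<le> (a + 2 * (real n + 1)) * norm1 n v"
proof -
  have t: "cmod (Tm a n v k) \<le> a * cmod (v k) + 2 * (real n + 1) * (if k < n then cmod (v (Suc k)) else 0)"
    if "k \<le> n" for k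
  proof -
    have "cmod (Tm a n v k) \<le> cmod (\<i> * of_real a * v k) + cmod (if k < n then 2 * \<i> * of_nat (Suc k) * v (Suc k) else 0)"
      unfolding Tm_def by (rule norm_triangle_ineq4)
    also have "\<dots> \<le> a * cmod (v k) + 2 * (real n + 1) * (if k < n then cmod (v (Suc k)) else 0)"
    proof -
      have nn: "cmod (2 * \<i> * of_nat (Suc k) * v (Suc k)) = 2 * real (Suc k) * cmod (v (Suc k))"
        by (simp only: norm_mult norm_of_nat) simp
      have "cmod (if k < n then 2 * \<i> * of_nat (Suc k) * v (Suc k) else 0) \<le> 2 * (real n + 1) * (if k < n then cmod (v (Suc k)) else 0)"
      proof (cases "k < n")
        case True
        have "2 * real (Suc k) * cmod (v (Suc k)) \<le> 2 * (real n + 1) * cmod (v (Suc k))"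
          using True by (intro mult_right_mono) auto
        then show ?thesis using True nn by (simp only: if_True)
      qed simp
      then show ?thesis using a by (simp add: norm_mult)
    qed
    finally show ?thesis .
  qed
  have "norm1 n (Tm a n v) \<le> (\<Sum>k\<le>n. a * cmod (v k) + 2 * (real n + 1) * (if k < n then cmod (v (Suc k)) else 0))"
    unfolding norm1_def by (rule sum_mono) (use t in auto)
  also have "\<dots> = a * norm1 n v + 2 * (real n + 1) * (\<Sum>k\<le>n. (if k < n then cmod (v (Suc k)) else 0))"
    by (simp add: sum.distrib sum_distrib_left norm1_def)
  also have "\<dots> \<le> a * norm1 n v + 2 * (real n + 1) * norm1 n v"
    unfolding norm1_def by (intro add_left_mono mult_left_mono shift_sum_le) auto
  finally show ?thesis by (simp add: algebra_simps)
qed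

lemma Tm_pow_bound:
  assumes a: "a \<ge> 0"
  shows "norm1 n ((Tm a n ^^ j) v) \<le> (a + 2 * (real n + 1)) ^ j * norm1 n v"
proof (induction j)
  case 0 then show ?case by simp
next
  case (Suc j)
  have K: "a + 2 * (real n + 1) \<ge> 0" using a by simp
  have "norm1 n ((Tm a n ^^ Suc j) v) \<le> (a + 2 * (real n + 1)) * norm1 n ((Tm a n ^^ j) v)"
    using Tm_bound[OF a] by simp
  also have "\<dots> \<le> (a + 2 * (real n + 1)) * ((a + 2 * (real n + 1)) ^ j * norm1 n v)"
    by (rule mult_left_mono[OF Suc K])
  finally show ?case by simp
qed

lemma TV_pow: "(TV ^^ j) V i = (Tm (snd i) (fst i) ^^ j) (V i)"
  by (induction j) (auto simp: TV_def)

definition l2sq :: "fn \<Rightarrow> real" where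
  "l2sq f = (LINT x|lborel. (cmod (f x))\<^sup>2)"

lemma l2sq_nonneg: "l2sq f \<ge> 0"
  unfolding l2sq_def by (rule integral_nonneg_AE) auto

lemma l2_norm_l2sq: "l2_norm f = sqrt (l2sq f)"
  by (simp add: l2_norm_def l2sq_def)

lemma l2sq_add_le:
  assumes "L2 f" "L2 g" shows "l2sq (\<lambda>x. f x + g x) \<le> 2 * l2sq f + 2 * l2sq g"
proof -
  have i: "integrable lborel (\<lambda>x. (cmod (f x + g x))\<^sup>2)" using L2_add[OF assms] by (simp add: L2_def)
  have if': "integrable lborel (\<lambda>x. (cmod (f x))\<^sup>2)" "integrable lborel (\<lambda>x. (cmod (g x))\<^sup>2)"
    using assms by (auto simp: L2_def)
  have "l2sq (\<lambda>x. f x + g x) \<le> (LINT x|lborel. 2 * (cmod (f x))\<^sup>2 + 2 * (cmod (g x))\<^sup>2)"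
    unfolding l2sq_def
  proof (rule integral_mono[OF i])
    show "integrable lborel (\<lambda>x. 2 * (cmod (f x))\<^sup>2 + 2 * (cmod (g x))\<^sup>2)"
      using if' by (intro Bochner_Integration.integrable_add integrable_mult_right) auto
    fix x
    have t: "cmod (f x + g x) \<le> cmod (f x) + cmod (g x)" by (rule norm_triangle_ineq)
    have "(cmod (f x + g x))\<^sup>2 \<le> (cmod (f x) + cmod (g x))\<^sup>2"
      using t by (intro power_mono) auto
    also have "\<dots> \<le> 2 * (cmod (f x))\<^sup>2 + 2 * (cmod (g x))\<^sup>2"
      using sum_squares_bound[of "cmod (f x)" "cmod (g x)"] by (simp add: algebra_simps power2_eq_square)
    finally show "(cmod (f x + g x))\<^sup>2 \<le> 2 * (cmod (f x))\<^sup>2 + 2 * (cmod (g x))\<^sup>2" .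
  qed
  also have "\<dots> = 2 * l2sq f + 2 * l2sq g"
    unfolding l2sq_def using if' by simp
  finally show ?thesis .
qed

lemma l2sq_cmult: "l2sq (\<lambda>x. c * f x) = (cmod c)\<^sup>2 * l2sq f"
  unfolding l2sq_def by (simp add: norm_mult power_mult_distrib)

lemma l2sq_sum_tendsto:
  assumes "finite I" "\<And>i N. i \<in> I \<Longrightarrow> L2 (h i N)" "\<And>i. i \<in> I \<Longrightarrow> (\<lambda>N. l2sq (h i N)) \<longlonglongrightarrow> 0"
  shows "(\<lambda>N. l2sq (\<lambda>x. \<Sum>i\<in>I. h i N x)) \<longlonglongrightarrow> 0"
  using assms
proof (induction I rule: finite_induct)
  case empty then show ?case by (simp add: l2sq_def)
next
  case (insert j I)
  have IH: "(\<lambda>N. l2sq (\<lambda>x. \<Sum>i\<in>I. h i N x)) \<longlonglongrightarrow> 0"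
    using insert by auto
  have L: "L2 (h j N)" "L2 (\<lambda>x. \<Sum>i\<in>I. h i N x)" for N
    using insert by (auto intro!: L2_sum)
  have "(\<lambda>N. 2 * l2sq (h j N) + 2 * l2sq (\<lambda>x. \<Sum>i\<in>I. h i N x)) \<longlonglongrightarrow> 2 * 0 + 2 * 0"
    using insert IH by (intro tendsto_intros) auto
  then have "(\<lambda>N. 2 * l2sq (h j N) + 2 * l2sq (\<lambda>x. \<Sum>i\<in>I. h i N x)) \<longlonglongrightarrow> 0" by simp
  then have "(\<lambda>N. l2sq (\<lambda>x. h j N x + (\<Sum>i\<in>I. h i N x))) \<longlonglongrightarrow> 0"
    by (rule Lim_null_comparison[rotated]) (auto intro!: always_eventually l2sq_add_le L simp: l2sq_nonneg)
  then show ?case using insert by simp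
qed

lemma l2sq_Ef_tendsto:
  assumes F: "validF F" and D: "\<And>i k. i \<in> F \<Longrightarrow> k \<le> fst i \<Longrightarrow> (\<lambda>N. D N i k) \<longlonglongrightarrow> 0"
  shows "(\<lambda>N. l2sq (Ef p F (D N))) \<longlonglongrightarrow> 0"
proof -
  have Fi: "finite F" "\<And>i. i \<in> F \<Longrightarrow> snd i > 0" using F by (auto simp: validF_def)
  have "(\<lambda>N. l2sq (\<lambda>x. \<Sum>i\<in>F. (\<lambda>N x. \<Sum>k\<le>fst i. D N i k * of_real (ebas p (snd i) k x)) N x)) \<longlonglongrightarrow> 0"
  proof (rule l2sq_sum_tendsto[OF Fi(1)])
    fix i N assume i: "i \<in> F"
    show "L2 (\<lambda>x. \<Sum>k\<le>fst i. D N i k * of_real (ebas p (snd i) k x))"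
      by (intro L2_sum L2_cmult L2_ebas Fi(2) i) auto
  next
    fix i assume i: "i \<in> F"
    show "(\<lambda>N. l2sq (\<lambda>x. \<Sum>k\<le>fst i. D N i k * of_real (ebas p (snd i) k x))) \<longlonglongrightarrow> 0"
    proof (rule l2sq_sum_tendsto)
      fix k N assume "k \<in> {..fst i}"
      show "L2 (\<lambda>x. D N i k * of_real (ebas p (snd i) k x))"
        by (intro L2_cmult L2_ebas Fi(2) i)
    next
      fix k assume k: "k \<in> {..fst i}"
      have "(\<lambda>N. (cmod (D N i k))\<^sup>2 * l2sq (\<lambda>x. of_real (ebas p (snd i) k x))) \<longlonglongrightarrow> (cmod 0)\<^sup>2 * l2sq (\<lambda>x. of_real (ebas p (snd i) k x))"
        using D[OF i] k by (intro tendsto_intros) auto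
      then show "(\<lambda>N. l2sq (\<lambda>x. D N i k * of_real (ebas p (snd i) k x))) \<longlonglongrightarrow> 0"
        by (simp add: l2sq_cmult)
    qed auto
  qed
  then show ?thesis by (simp add: Ef_def[abs_def])
qed

lemma Ef_sum: "(\<Sum>m\<le>N. c m * Ef p F (W m) x) = Ef p F (\<lambda>i k. \<Sum>m\<le>N. c m * W m i k) x"
  unfolding Ef_def sum_distrib_left sum_distrib_right
  by (subst sum.swap) (simp add: sum.swap[of _ "{..N}"] mult.assoc)

lemma Ef_diff: "Ef p F V x - Ef p F W x = Ef p F (\<lambda>i k. V i k - W i k) x"
  unfolding Ef_def by (simp add: sum_subtractf[symmetric] left_diff_distrib)

lemma Ef_cmult: "c * Ef p F V x = Ef p F (\<lambda>i k. c * V i k) x"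
  unfolding Ef_def by (simp add: sum_distrib_left mult.assoc)

lemma rel_pow_Ef:
  assumes E: "\<And>V. A (Ef p F V) (Ef p F (TV V))" and F: "validF F"
  shows "rel_pow A j (Ef p F V) (Ef p F ((TV ^^ j) V))"
proof (induction j arbitrary: V)
  case 0 then show ?case using L2_Ef[OF F] by (simp add: ae_eq_def)
next
  case (Suc j)
  have "rel_pow A j (Ef p F (TV V)) (Ef p F ((TV ^^ j) (TV V)))" by (rule Suc)
  then show ?case using E[of V] by (auto simp: funpow_Suc_right simp del: funpow.simps)
qed

lemma rel_pow_Ef_unique:
  assumes U: "\<And>V f m. A f m \<Longrightarrow> AE x in lborel. f x = Ef p F V x \<Longrightarrow> AE x in lborel. m x = Ef p F (TV V) x"
  shows "rel_pow A j f h \<Longrightarrow> AE x in lborel. f x = Ef p F V x \<Longrightarrow> AE x in lborel. h x = Ef p F ((TV ^^ j) V) x"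
proof (induction j arbitrary: f V)
  case 0 then show ?case by (auto simp: ae_eq_def elim: eventually_mono[OF eventually_conj])
next
  case (Suc j)
  then obtain m where m: "A f m" "rel_pow A j m h" by auto
  have "AE x in lborel. m x = Ef p F (TV V) x" by (rule U[OF m(1) Suc.prems(2)])
  from Suc.IH[OF m(2) this] show ?case by (simp add: funpow_Suc_right del: funpow.simps)
qed


definition LSf :: "real \<Rightarrow> (nat \<times> real \<Rightarrow> nat \<Rightarrow> complex) \<Rightarrow> nat \<times> real \<Rightarrow> nat \<Rightarrow> complex" where
  "LSf \<epsilon> V i k = (\<Sum>m. of_real (cf \<epsilon> m) * (TV ^^ (2*m+1)) V i k)"

definition Wf :: "real \<Rightarrow> (nat \<times> real \<Rightarrow> nat \<Rightarrow> complex) \<Rightarrow> nat \<times> real \<Rightarrow> nat \<Rightarrow> complex" where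
  "Wf \<epsilon> V i k = - of_real (1 / sqrt \<epsilon>) * LSf \<epsilon> V i k"

lemma series_facts:
  assumes F: "validF F" and i: "i \<in> F" and k: "k \<le> fst i"
  shows "eventually (\<lambda>\<epsilon>. summable (\<lambda>m. of_real (cf \<epsilon> m) * (TV ^^ (2*m+1)) V i k)) (at_right 0)"
    and "((\<lambda>\<epsilon>. Wf \<epsilon> V i k) \<longlongrightarrow> - TV V i k) (at_right 0)"
proof -
  have a: "snd i > 0" using F i by (auto simp: validF_def)
  define K where "K = snd i + 2 * (real (fst i) + 1)"
  define C where "C = norm1 (fst i) (V i)"
  have K0: "K \<ge> 0" using a by (simp add: K_def)
  have C0: "C \<ge> 0" by (simp add: C_def norm1_nonneg)
  have X: "cmod ((TV ^^ j) V i k) \<le> C * K^j" for j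
  proof -
    have "cmod ((TV ^^ j) V i k) \<le> norm1 (fst i) ((TV ^^ j) V i)"
      by (rule comp_le_norm1[OF k])
    also have "\<dots> \<le> K ^ j * C"
      unfolding TV_pow K_def C_def using a by (intro Tm_pow_bound) auto
    finally show ?thesis by (simp add: mult.commute)
  qed
  note ss = scalar_series[of "\<lambda>j. (TV ^^ j) V i k", OF X C0 K0]
  show "eventually (\<lambda>\<epsilon>. summable (\<lambda>m. of_real (cf \<epsilon> m) * (TV ^^ (2*m+1)) V i k)) (at_right 0)"
    using ss(1) .
  have "((\<lambda>\<epsilon>. - (of_real (1 / sqrt \<epsilon>) * (\<Sum>m. of_real (cf \<epsilon> m) * (TV ^^ (2*m+1)) V i k))) \<longlongrightarrow> - ((TV ^^ 1) V i k)) (at_right 0)"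
    by (rule tendsto_minus[OF ss(2)])
  then show "((\<lambda>\<epsilon>. Wf \<epsilon> V i k) \<longlongrightarrow> - TV V i k) (at_right 0)"
    by (simp add: Wf_def LSf_def)
qed

lemma rel_pow_L2: "rel_pow A j f h \<Longrightarrow> L2 h"
  by (induction j arbitrary: f) auto

lemma l2sq_zero_ae: assumes "L2 f" "l2sq f = 0" shows "AE x in lborel. f x = 0"
proof -
  have "AE x in lborel. (cmod (f x))\<^sup>2 = 0"
    using assms integral_nonneg_eq_0_iff_AE[of lborel "\<lambda>x. (cmod (f x))\<^sup>2"]
    unfolding L2_def l2sq_def by auto
  then show ?thesis by auto
qed

lemma l2sq_cong: assumes "L2 f" "L2 g" "AE x in lborel. f x = g x" shows "l2sq f = l2sq g"
proof -
  have [measurable]: "f \<in> borel_measurable borel" "g \<in> borel_measurable borel" using assms by (auto simp: L2_def)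
  show ?thesis unfolding l2sq_def
    by (rule integral_cong_AE) (use assms(3) in \<open>auto elim!: eventually_mono\<close>)
qed

lemma S_main:
  fixes A :: "fn \<Rightarrow> fn \<Rightarrow> bool" and P :: "fn \<Rightarrow> bool"
  assumes F: "validF F"
    and E: "\<And>V. A (Ef p F V) (Ef p F (TV V))"
    and U: "\<And>V f m. A f m \<Longrightarrow> AE x in lborel. f x = Ef p F V x \<Longrightarrow> AE x in lborel. m x = Ef p F (TV V) x"
    and Pf: "P (Ef p F V0)"
  shows "eventually (\<lambda>\<epsilon>. (\<exists>g. S_rel A P \<epsilon> (Ef p F V0) g) \<and>
     (\<forall>g. S_rel A P \<epsilon> (Ef p F V0) g \<longrightarrow> (AE x in lborel. g x = Ef p F (Wf \<epsilon> V0) x))) (at_right 0)"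
proof -
  let ?I = "Sigma F (\<lambda>i. {..fst i})"
  have fin: "finite ?I" using F by (auto simp: validF_def)
  have ev: "eventually (\<lambda>\<epsilon>. \<forall>ik\<in>?I. summable (\<lambda>m. of_real (cf \<epsilon> m) * (TV ^^ (2*m+1)) V0 (fst ik) (snd ik))) (at_right 0)"
  proof (rule eventually_ball_finite[OF fin], rule ballI)
    fix ik assume "ik \<in> ?I"
    then have i: "fst ik \<in> F" and k: "snd ik \<le> fst (fst ik)" by auto
    show "\<forall>\<^sub>F \<epsilon> in at_right 0. summable (\<lambda>m. of_real (cf \<epsilon> m) * (TV ^^ (2*m+1)) V0 (fst ik) (snd ik))"
      by (rule series_facts(1)[OF F i k])
  qed
  show ?thesis
    using ev eventually_at_right_less[of 0]
  proof eventually_elim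
    case (elim \<epsilon>)
    have sm: "summable (\<lambda>m. of_real (cf \<epsilon> m) * (TV ^^ (2*m+1)) V0 i k)" if "i \<in> F" "k \<le> fst i" for i k
      using elim(1) that by force
    define u where "u n = Ef p F ((TV ^^ (2*n+1)) V0)" for n
    define s where "s = Ef p F (LSf \<epsilon> V0)"
    have Ls: "L2 s" unfolding s_def by (rule L2_Ef[OF F])
    have Lu: "L2 (u n)" for n unfolding u_def by (rule L2_Ef[OF F])
    have ru: "rel_pow A (2*n+1) (Ef p F V0) (u n)" for n
      unfolding u_def by (rule rel_pow_Ef[where A=A and p=p and F=F, OF E F])
    have conv2: "(\<lambda>N. l2sq (\<lambda>x. (\<Sum>n\<le>N. of_real (cf \<epsilon> n) * u n x) - s x)) \<longlonglongrightarrow> 0"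
    proof -
      have eq: "(\<lambda>x. (\<Sum>n\<le>N. of_real (cf \<epsilon> n) * u n x) - s x)
          = Ef p F (\<lambda>i k. (\<Sum>m\<le>N. of_real (cf \<epsilon> m) * (TV ^^ (2*m+1)) V0 i k) - LSf \<epsilon> V0 i k)" for N
        unfolding u_def s_def by (simp add: Ef_sum Ef_diff fun_eq_iff)
      have "(\<lambda>N. l2sq (Ef p F (\<lambda>i k. (\<Sum>m\<le>N. of_real (cf \<epsilon> m) * (TV ^^ (2*m+1)) V0 i k) - LSf \<epsilon> V0 i k))) \<longlonglongrightarrow> 0"
      proof (rule l2sq_Ef_tendsto[OF F])
        fix i k assume "i \<in> F" "k \<le> fst i"
        from summable_LIMSEQ'[OF sm[OF this]]
        show "(\<lambda>N. (\<Sum>m\<le>N. of_real (cf \<epsilon> m) * (TV ^^ (2*m+1)) V0 i k) - LSf \<epsilon> V0 i k) \<longlonglongrightarrow> 0"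
          unfolding LSf_def by (simp add: LIM_zero)
      qed
      then show ?thesis unfolding eq .
    qed
    have conv: "(\<lambda>N. l2_norm (\<lambda>x. (\<Sum>n\<le>N. of_real (cf \<epsilon> n) * u n x) - s x)) \<longlonglongrightarrow> 0"
      unfolding l2_norm_l2sq using tendsto_real_sqrt[OF conv2] by simp
    have gEf: "Ef p F (Wf \<epsilon> V0) x = - of_real (1 / sqrt \<epsilon>) * s x" for x
      unfolding s_def Ef_cmult Wf_def ..
    have ex: "S_rel A P \<epsilon> (Ef p F V0) (Ef p F (Wf \<epsilon> V0))"
      unfolding S_rel_def
    proof (intro conjI exI[of _ u] exI[of _ s] allI)
      show "P (Ef p F V0)" by (rule Pf)
      show "rel_pow A (2*n+1) (Ef p F V0) (u n)" for n by (rule ru)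
      show "L2 s" by (rule Ls)
      show "(\<lambda>N. l2_norm (\<lambda>x. (\<Sum>n\<le>N. of_real ((-1)^n / real (2*n+1) * (sqrt \<epsilon>)^(2*n+1)) * u n x) - s x)) \<longlonglongrightarrow> 0"
        using conv unfolding cf_def .
      show "L2 (Ef p F (Wf \<epsilon> V0))" by (rule L2_Ef[OF F])
      show "AE x in lborel. Ef p F (Wf \<epsilon> V0) x = - of_real (1 / sqrt \<epsilon>) * s x"
        using gEf by simp
    qed
    have un: "AE x in lborel. g x = Ef p F (Wf \<epsilon> V0) x" if Sg: "S_rel A P \<epsilon> (Ef p F V0) g" for g
    proof -
      obtain u' s' where u': "\<And>n. rel_pow A (2*n+1) (Ef p F V0) (u' n)" and Ls': "L2 s'"
        and conv': "(\<lambda>N. l2_norm (\<lambda>x. (\<Sum>n\<le>N. of_real (cf \<epsilon> n) * u' n x) - s' x)) \<longlonglongrightarrow> 0"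
        and gs': "AE x in lborel. g x = - of_real (1 / sqrt \<epsilon>) * s' x"
        using Sg unfolding S_rel_def cf_def by blast
      have Lu': "L2 (u' n)" for n using rel_pow_L2[OF u'] .
      have aeu: "AE x in lborel. u' n x = u n x" for n
        unfolding u_def
      proof (rule rel_pow_Ef_unique[where A=A and p=p and F=F and V=V0])
        show "\<And>V f m. A f m \<Longrightarrow> AE x in lborel. f x = Ef p F V x \<Longrightarrow> AE x in lborel. m x = Ef p F (TV V) x"
          by (rule U)
        show "rel_pow A (2*n+1) (Ef p F V0) (u' n)" by (rule u')
        show "AE x in lborel. Ef p F V0 x = Ef p F V0 x" by (rule AE_I2) (rule refl)
      qed
      then have aeall: "AE x in lborel. \<forall>n. u' n x = u n x" by (simp add: AE_all_countable)
      define D where "D N x = (\<Sum>n\<le>N. of_real (cf \<epsilon> n) * u n x) - s' x" for N x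
      define G where "G N x = (\<Sum>n\<le>N. of_real (cf \<epsilon> n) * u n x) - s x" for N x
      have LD: "L2 (D N)" for N unfolding D_def[abs_def] using Lu Ls'
        by (intro L2_minus L2_sum L2_cmult) auto
      have LG: "L2 (G N)" for N unfolding G_def[abs_def] using Lu Ls
        by (intro L2_minus L2_sum L2_cmult) auto
      have LD': "L2 (\<lambda>x. (\<Sum>n\<le>N. of_real (cf \<epsilon> n) * u' n x) - s' x)" for N using Lu' Ls'
        by (intro L2_minus L2_sum L2_cmult) auto
      have "l2sq (\<lambda>x. (\<Sum>n\<le>N. of_real (cf \<epsilon> n) * u' n x) - s' x) = l2sq (D N)" for N
        by (rule l2sq_cong[OF LD' LD]) (use aeall in \<open>auto simp: D_def elim!: eventually_mono\<close>)
      moreover have "(\<lambda>N. l2sq (\<lambda>x. (\<Sum>n\<le>N. of_real (cf \<epsilon> n) * u' n x) - s' x)) \<longlonglongrightarrow> 0"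
      proof -
        have "(\<lambda>N. (l2_norm (\<lambda>x. (\<Sum>n\<le>N. of_real (cf \<epsilon> n) * u' n x) - s' x))\<^sup>2) \<longlonglongrightarrow> 0\<^sup>2"
          by (intro tendsto_intros conv')
        then show ?thesis by (simp add: l2_norm_l2sq l2sq_nonneg)
      qed
      ultimately have cD: "(\<lambda>N. l2sq (D N)) \<longlonglongrightarrow> 0" by simp
      have cG: "(\<lambda>N. l2sq (G N)) \<longlonglongrightarrow> 0" using conv2 unfolding G_def[abs_def] .
      have Ldiff: "L2 (\<lambda>x. s' x - s x)" by (rule L2_minus[OF Ls' Ls])
      have bnd: "l2sq (\<lambda>x. s' x - s x) \<le> 2 * l2sq (G N) + 2 * l2sq (D N)" for N
      proof -
        have e: "(\<lambda>x. s' x - s x) = (\<lambda>x. G N x + (-1) * D N x)" by (auto simp: G_def D_def fun_eq_iff)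
        have "l2sq (\<lambda>x. G N x + (-1) * D N x) \<le> 2 * l2sq (G N) + 2 * l2sq (\<lambda>x. (-1) * D N x)"
          by (rule l2sq_add_le[OF LG L2_cmult[OF LD]])
        then show ?thesis unfolding e l2sq_cmult by simp
      qed
      have "(\<lambda>N. 2 * l2sq (G N) + 2 * l2sq (D N)) \<longlonglongrightarrow> 2 * 0 + 2 * 0"
        by (intro tendsto_intros cG cD)
      then have "l2sq (\<lambda>x. s' x - s x) \<le> 2 * 0 + 2 * 0"
        by (rule LIMSEQ_le_const) (use bnd in blast)
      then have "l2sq (\<lambda>x. s' x - s x) = 0" using l2sq_nonneg[of "\<lambda>x. s' x - s x"] by simp
      then have "AE x in lborel. s' x - s x = 0" by (rule l2sq_zero_ae[OF Ldiff])
      with gs' show ?thesis by eventually_elim (simp add: gEf)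
    qed
    show ?case using ex un by blast
  qed
qed

lemma op_main:
  assumes E: "A (Ef p F V) (Ef p F (TV V))"
    and U: "\<And>m. A (Ef p F V) m \<Longrightarrow> AE x in lborel. m x = Ef p F (TV V) x"
  shows "AE x in lborel. (SOME h. A (Ef p F V) h) x = Ef p F (TV V) x"
  using U someI[of "A (Ef p F V)", OF E] by blast


lemma M0_Ef: assumes "\<phi> \<in> M0" shows "\<exists>F V. validF F \<and> \<phi> = Ef 0 F V"
proof -
  obtain F and c :: "nat \<times> real \<Rightarrow> complex" where F: "finite F" "\<forall>(n,a)\<in>F. 0 < a \<and> a < 1"
    and \<phi>: "\<phi> = (\<lambda>x. \<Sum>(n,a)\<in>F. c (n,a) * of_real (x^(2*n) * exp (- a * x\<^sup>2 / 2)))"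
    using assms unfolding M0_def by blast
  define V where "V i k = (if k = fst i then c i else 0)" for i k
  have "validF F" using F by (auto simp: validF_def)
  moreover have "\<phi> = Ef 0 F V"
  proof
    fix x
    have "Ef 0 F V x = (\<Sum>i\<in>F. c i * of_real (ebas 0 (snd i) (fst i) x))"
      unfolding Ef_def
    proof (intro sum.cong refl)
      fix i
      have "(\<Sum>k\<le>fst i. V i k * of_real (ebas 0 (snd i) k x)) = (\<Sum>k\<le>fst i. if k = fst i then c i * of_real (ebas 0 (snd i) k x) else 0)"
        by (intro sum.cong refl) (auto simp: V_def)
      also have "\<dots> = c i * of_real (ebas 0 (snd i) (fst i) x)" by (simp add: sum.delta)
      finally show "(\<Sum>k\<le>fst i. V i k * of_real (ebas 0 (snd i) k x)) = c i * of_real (ebas 0 (snd i) (fst i) x)" .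
    qed
    also have "\<dots> = \<phi> x"
      unfolding \<phi> by (intro sum.cong refl) (auto simp: ebas_def)
    finally show "\<phi> x = Ef 0 F V x" ..
  qed
  ultimately show ?thesis by blast
qed

lemma M1_Ef: assumes "\<phi> \<in> M1" shows "\<exists>F V. validF F \<and> \<phi> = Ef 1 F V"
proof -
  obtain F and c :: "nat \<times> real \<Rightarrow> complex" where F: "finite F" "\<forall>(n,a)\<in>F. 0 < a \<and> a < 1"
    and \<phi>: "\<phi> = (\<lambda>x. \<Sum>(n,a)\<in>F. c (n,a) * of_real (x^(2*n+1) * exp (- a * x\<^sup>2 / 2)))"
    using assms unfolding M1_def by blast
  define V where "V i k = (if k = fst i then c i else 0)" for i k
  have "validF F" using F by (auto simp: validF_def)
  moreover have "\<phi> = Ef 1 F V"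
  proof
    fix x
    have "Ef 1 F V x = (\<Sum>i\<in>F. c i * of_real (ebas 1 (snd i) (fst i) x))"
      unfolding Ef_def
    proof (intro sum.cong refl)
      fix i
      have "(\<Sum>k\<le>fst i. V i k * of_real (ebas 1 (snd i) k x)) = (\<Sum>k\<le>fst i. if k = fst i then c i * of_real (ebas 1 (snd i) k x) else 0)"
        by (intro sum.cong refl) (auto simp: V_def)
      also have "\<dots> = c i * of_real (ebas 1 (snd i) (fst i) x)" by (simp add: sum.delta)
      finally show "(\<Sum>k\<le>fst i. V i k * of_real (ebas 1 (snd i) k x)) = c i * of_real (ebas 1 (snd i) (fst i) x)" .
    qed
    also have "\<dots> = \<phi> x"
      unfolding \<phi> by (intro sum.cong refl) (auto simp: ebas_def)
    finally show "\<phi> x = Ef 1 F V x" ..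
  qed
  ultimately show ?thesis by blast
qed

lemma even_Ef: "validF F \<Longrightarrow> L2_even (Ef 0 F V)"
  unfolding L2_even_def using L2_Ef Ef_even by auto

lemma odd_Ef: "validF F \<Longrightarrow> L2_odd (Ef 1 F V)"
  unfolding L2_odd_def using L2_Ef Ef_odd by auto

lemma l2_inner_cong:
  assumes "L2 a" "L2 a'" "L2 b" "L2 b'" "AE x in lborel. a x = a' x" "AE x in lborel. b x = b' x"
  shows "l2_inner a b = l2_inner a' b'"
proof -
  have [measurable]: "a \<in> borel_measurable borel" "a' \<in> borel_measurable borel"
    "b \<in> borel_measurable borel" "b' \<in> borel_measurable borel" using assms by (auto simp: L2_def)
  show ?thesis unfolding l2_inner_def
    by (rule integral_cong_AE) (use assms(5,6) in \<open>auto elim!: eventually_mono[OF eventually_conj]\<close>)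
qed

lemma l2_inner_Ef_right:
  assumes L: "L2 \<psi>" and F: "validF F"
  shows "l2_inner \<psi> (Ef p F W) = (\<Sum>i\<in>F. \<Sum>k\<le>fst i. W i k * l2_inner \<psi> (\<lambda>x. of_real (ebas p (snd i) k x)))"
proof -
  have Fi: "finite F" "\<And>i. i \<in> F \<Longrightarrow> snd i > 0" using F by (auto simp: validF_def)
  have int: "integrable lborel (\<lambda>x. cnj (\<psi> x) * of_real (ebas p (snd i) k x))" if "i \<in> F" for i k
    by (rule L2_integrable_mult[OF L2_cnj[OF L] L2_ebas[OF Fi(2)[OF that]]])
  have "l2_inner \<psi> (Ef p F W) = (LINT x|lborel. (\<Sum>i\<in>F. \<Sum>k\<le>fst i. W i k * (cnj (\<psi> x) * of_real (ebas p (snd i) k x))))"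
    unfolding l2_inner_def Ef_def by (simp add: sum_distrib_left algebra_simps)
  also have "\<dots> = (\<Sum>i\<in>F. LINT x|lborel. (\<Sum>k\<le>fst i. W i k * (cnj (\<psi> x) * of_real (ebas p (snd i) k x))))"
    by (rule Bochner_Integration.integral_sum) (use int in auto)
  also have "\<dots> = (\<Sum>i\<in>F. \<Sum>k\<le>fst i. LINT x|lborel. W i k * (cnj (\<psi> x) * of_real (ebas p (snd i) k x)))"
    by (intro sum.cong refl Bochner_Integration.integral_sum) (use int in auto)
  also have "\<dots> = (\<Sum>i\<in>F. \<Sum>k\<le>fst i. W i k * l2_inner \<psi> (\<lambda>x. of_real (ebas p (snd i) k x)))"
    unfolding l2_inner_def by simp
  finally show ?thesis .
qed

lemma l2_inner_Ef_left:
  assumes L: "L2 \<phi>" and F: "validF F"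
  shows "l2_inner (Ef p F W) \<phi> = (\<Sum>i\<in>F. \<Sum>k\<le>fst i. cnj (W i k) * l2_inner (\<lambda>x. of_real (ebas p (snd i) k x)) \<phi>)"
proof -
  have Fi: "finite F" "\<And>i. i \<in> F \<Longrightarrow> snd i > 0" using F by (auto simp: validF_def)
  have int: "integrable lborel (\<lambda>x. of_real (ebas p (snd i) k x) * \<phi> x)" if "i \<in> F" for i k
    by (rule L2_integrable_mult[OF L2_ebas[OF Fi(2)[OF that]] L])
  have "l2_inner (Ef p F W) \<phi> = (LINT x|lborel. (\<Sum>i\<in>F. \<Sum>k\<le>fst i. cnj (W i k) * (of_real (ebas p (snd i) k x) * \<phi> x)))"
    unfolding l2_inner_def Ef_def by (simp add: sum_distrib_left sum_distrib_right algebra_simps)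
  also have "\<dots> = (\<Sum>i\<in>F. LINT x|lborel. (\<Sum>k\<le>fst i. cnj (W i k) * (of_real (ebas p (snd i) k x) * \<phi> x)))"
    by (rule Bochner_Integration.integral_sum) (use int in auto)
  also have "\<dots> = (\<Sum>i\<in>F. \<Sum>k\<le>fst i. LINT x|lborel. cnj (W i k) * (of_real (ebas p (snd i) k x) * \<phi> x))"
    by (intro sum.cong refl Bochner_Integration.integral_sum) (use int in auto)
  also have "\<dots> = (\<Sum>i\<in>F. \<Sum>k\<le>fst i. cnj (W i k) * l2_inner (\<lambda>x. of_real (ebas p (snd i) k x)) \<phi>)"
    unfolding l2_inner_def by simp
  finally show ?thesis .
qed

lemma lim_right:
  assumes F: "validF F" and L: "L2 \<psi>"
    and ev: "eventually (\<lambda>\<epsilon>. L2 (G \<epsilon>) \<and> (AE x in lborel. G \<epsilon> x = Ef p F (Wf \<epsilon> V) x)) (at_right 0)"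
    and H: "L2 H" "AE x in lborel. H x = Ef p F (TV V) x"
  shows "((\<lambda>\<epsilon>. l2_inner \<psi> (G \<epsilon>)) \<longlongrightarrow> - l2_inner \<psi> H) (at_right 0)"
proof -
  let ?c = "\<lambda>i k. l2_inner \<psi> (\<lambda>x. of_real (ebas p (snd i) k x))"
  have e1: "eventually (\<lambda>\<epsilon>. (\<Sum>i\<in>F. \<Sum>k\<le>fst i. Wf \<epsilon> V i k * ?c i k) = l2_inner \<psi> (G \<epsilon>)) (at_right 0)"
    using ev
  proof eventually_elim
    case (elim \<epsilon>)
    have "l2_inner \<psi> (G \<epsilon>) = l2_inner \<psi> (Ef p F (Wf \<epsilon> V))"
      by (rule l2_inner_cong[OF L L conjunct1[OF elim] L2_Ef[OF F]]) (use elim in auto)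
    then show ?case using l2_inner_Ef_right[OF L F] by simp
  qed
  have "((\<lambda>\<epsilon>. \<Sum>i\<in>F. \<Sum>k\<le>fst i. Wf \<epsilon> V i k * ?c i k) \<longlongrightarrow> (\<Sum>i\<in>F. \<Sum>k\<le>fst i. (- TV V i k) * ?c i k)) (at_right 0)"
    by (intro tendsto_sum tendsto_mult tendsto_const series_facts(2)[OF F]) auto
  moreover have "(\<Sum>i\<in>F. \<Sum>k\<le>fst i. (- TV V i k) * ?c i k) = - l2_inner \<psi> H"
  proof -
    have "l2_inner \<psi> H = l2_inner \<psi> (Ef p F (TV V))"
      by (rule l2_inner_cong[OF L L H(1) L2_Ef[OF F]]) (use H in auto)
    then show ?thesis using l2_inner_Ef_right[OF L F, of p "TV V"] by (simp add: sum_negf)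
  qed
  ultimately show ?thesis using tendsto_cong[OF e1] by simp
qed

lemma lim_left:
  assumes F: "validF F" and L: "L2 \<phi>"
    and ev: "eventually (\<lambda>\<epsilon>. L2 (G \<epsilon>) \<and> (AE x in lborel. G \<epsilon> x = Ef p F (Wf \<epsilon> V) x)) (at_right 0)"
    and H: "L2 H" "AE x in lborel. H x = Ef p F (TV V) x"
  shows "((\<lambda>\<epsilon>. l2_inner (G \<epsilon>) \<phi>) \<longlongrightarrow> - l2_inner H \<phi>) (at_right 0)"
proof -
  let ?c = "\<lambda>i k. l2_inner (\<lambda>x. of_real (ebas p (snd i) k x)) \<phi>"
  have e1: "eventually (\<lambda>\<epsilon>. (\<Sum>i\<in>F. \<Sum>k\<le>fst i. cnj (Wf \<epsilon> V i k) * ?c i k) = l2_inner (G \<epsilon>) \<phi>) (at_right 0)"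
    using ev
  proof eventually_elim
    case (elim \<epsilon>)
    have "l2_inner (G \<epsilon>) \<phi> = l2_inner (Ef p F (Wf \<epsilon> V)) \<phi>"
      by (rule l2_inner_cong[OF conjunct1[OF elim] L2_Ef[OF F] L L]) (use elim in auto)
    then show ?case using l2_inner_Ef_left[OF L F] by simp
  qed
  have "((\<lambda>\<epsilon>. \<Sum>i\<in>F. \<Sum>k\<le>fst i. cnj (Wf \<epsilon> V i k) * ?c i k) \<longlongrightarrow> (\<Sum>i\<in>F. \<Sum>k\<le>fst i. cnj (- TV V i k) * ?c i k)) (at_right 0)"
    by (intro tendsto_sum tendsto_mult tendsto_const tendsto_cnj series_facts(2)[OF F]) auto
  moreover have "(\<Sum>i\<in>F. \<Sum>k\<le>fst i. cnj (- TV V i k) * ?c i k) = - l2_inner H \<phi>"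
  proof -
    have "l2_inner H \<phi> = l2_inner (Ef p F (TV V)) \<phi>"
      by (rule l2_inner_cong[OF H(1) L2_Ef[OF F] L L]) (use H in auto)
    then show ?thesis using l2_inner_Ef_left[OF L F, of p "TV V"] by (simp add: sum_negf)
  qed
  ultimately show ?thesis using tendsto_cong[OF e1] by simp
qed


lemma S_rel_L2: "S_rel A P \<epsilon> f g \<Longrightarrow> L2 g"
  unfolding S_rel_def by blast

lemma even_facts:
  assumes F: "validF F"
  shows "eventually (\<lambda>\<epsilon>. L2 (S_op \<epsilon> (Ef 0 F V)) \<and> (AE x in lborel. S_op \<epsilon> (Ef 0 F V) x = Ef 0 F (Wf \<epsilon> V) x)) (at_right 0)"
    and "L2 (t_op (Ef 0 F V))" and "AE x in lborel. t_op (Ef 0 F V) x = Ef 0 F (TV V) x"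
proof -
  have U: "\<And>V' f m. t_rel f m \<Longrightarrow> AE x in lborel. f x = Ef 0 F V' x \<Longrightarrow> AE x in lborel. m x = Ef 0 F (TV V') x"
    using t_rel_Ef_unique[OF F] by blast
  have E: "\<And>V'. t_rel (Ef 0 F V') (Ef 0 F (TV V'))" using t_rel_Ef[OF F] by blast
  have SM: "eventually (\<lambda>\<epsilon>. (\<exists>g. S_rel t_rel L2_even \<epsilon> (Ef 0 F V) g) \<and> (\<forall>g. S_rel t_rel L2_even \<epsilon> (Ef 0 F V) g \<longrightarrow> (AE x in lborel. g x = Ef 0 F (Wf \<epsilon> V) x))) (at_right 0)"
  proof (rule S_main[where A=t_rel and P=L2_even and p=0 and F=F])
    show "validF F" by (rule F)
    show "\<And>V. t_rel (Ef 0 F V) (Ef 0 F (TV V))" by (rule E)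
    show "\<And>V f m. t_rel f m \<Longrightarrow> AE x in lborel. f x = Ef 0 F V x \<Longrightarrow> AE x in lborel. m x = Ef 0 F (TV V) x" by (rule U)
    show "L2_even (Ef 0 F V)" by (rule even_Ef[OF F])
  qed
  show "eventually (\<lambda>\<epsilon>. L2 (S_op \<epsilon> (Ef 0 F V)) \<and> (AE x in lborel. S_op \<epsilon> (Ef 0 F V) x = Ef 0 F (Wf \<epsilon> V) x)) (at_right 0)"
    using SM
  proof eventually_elim
    case (elim \<epsilon>)
    have S: "S_rel t_rel L2_even \<epsilon> (Ef 0 F V) (S_op \<epsilon> (Ef 0 F V))"
      unfolding S_op_def using someI_ex[OF conjunct1[OF elim]] .
    show ?case using S_rel_L2[OF S] conjunct2[OF elim] S by blast
  qed
  have T: "t_rel (Ef 0 F V) (t_op (Ef 0 F V))" unfolding t_op_def by (rule someI[of "t_rel (Ef 0 F V)", OF E[of V]])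
  then show "L2 (t_op (Ef 0 F V))" unfolding t_rel_def qinv_rel_def by blast
  show "AE x in lborel. t_op (Ef 0 F V) x = Ef 0 F (TV V) x"
    by (rule U[OF T]) (rule AE_I2, rule refl)
qed

lemma odd_facts:
  assumes F: "validF F"
  shows "eventually (\<lambda>\<epsilon>. L2 (Sadj_op \<epsilon> (Ef 1 F V)) \<and> (AE x in lborel. Sadj_op \<epsilon> (Ef 1 F V) x = Ef 1 F (Wf \<epsilon> V) x)) (at_right 0)"
    and "L2 (tadj_op (Ef 1 F V))" and "AE x in lborel. tadj_op (Ef 1 F V) x = Ef 1 F (TV V) x"
proof -
  have U: "\<And>V' f m. tadj_rel f m \<Longrightarrow> AE x in lborel. f x = Ef 1 F V' x \<Longrightarrow> AE x in lborel. m x = Ef 1 F (TV V') x"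
    using tadj_rel_Ef_unique[OF F] by blast
  have E: "\<And>V'. tadj_rel (Ef 1 F V') (Ef 1 F (TV V'))" using tadj_rel_Ef[OF F] by blast
  have SM: "eventually (\<lambda>\<epsilon>. (\<exists>g. S_rel tadj_rel L2_odd \<epsilon> (Ef 1 F V) g) \<and> (\<forall>g. S_rel tadj_rel L2_odd \<epsilon> (Ef 1 F V) g \<longrightarrow> (AE x in lborel. g x = Ef 1 F (Wf \<epsilon> V) x))) (at_right 0)"
  proof (rule S_main[where A=tadj_rel and P=L2_odd and p=1 and F=F])
    show "validF F" by (rule F)
    show "\<And>V. tadj_rel (Ef 1 F V) (Ef 1 F (TV V))" by (rule E)
    show "\<And>V f m. tadj_rel f m \<Longrightarrow> AE x in lborel. f x = Ef 1 F V x \<Longrightarrow> AE x in lborel. m x = Ef 1 F (TV V) x" by (rule U)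
    show "L2_odd (Ef 1 F V)" by (rule odd_Ef[OF F])
  qed
  show "eventually (\<lambda>\<epsilon>. L2 (Sadj_op \<epsilon> (Ef 1 F V)) \<and> (AE x in lborel. Sadj_op \<epsilon> (Ef 1 F V) x = Ef 1 F (Wf \<epsilon> V) x)) (at_right 0)"
    using SM
  proof eventually_elim
    case (elim \<epsilon>)
    have S: "S_rel tadj_rel L2_odd \<epsilon> (Ef 1 F V) (Sadj_op \<epsilon> (Ef 1 F V))"
      unfolding Sadj_op_def using someI_ex[OF conjunct1[OF elim]] .
    show ?case using S_rel_L2[OF S] conjunct2[OF elim] S by blast
  qed
  have T: "tadj_rel (Ef 1 F V) (tadj_op (Ef 1 F V))" unfolding tadj_op_def by (rule someI[of "tadj_rel (Ef 1 F V)", OF E[of V]])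
  then show "L2 (tadj_op (Ef 1 F V))" unfolding tadj_rel_def by blast
  show "AE x in lborel. tadj_op (Ef 1 F V) x = Ef 1 F (TV V) x"
    by (rule U[OF T]) (rule AE_I2, rule refl)
qed

theorem theorem5p1:
  assumes "\<psi>0 \<in> M0" and "\<psi>1 \<in> M1" and "\<phi>0 \<in> M0" and "\<phi>1 \<in> M1"
  shows "((\<lambda>\<epsilon>. t_eps \<epsilon> \<psi>0 \<psi>1 \<phi>0 \<phi>1) \<longlongrightarrow> t_AB \<psi>0 \<psi>1 \<phi>0 \<phi>1) (at_right 0)"
proof -
  obtain F1 V1 where F1: "validF F1" and e1: "\<psi>0 = Ef 0 F1 V1" using M0_Ef[OF assms(1)] by blast
  obtain F2 V2 where F2: "validF F2" and e2: "\<psi>1 = Ef 1 F2 V2" using M1_Ef[OF assms(2)] by blast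
  obtain F3 V3 where F3: "validF F3" and e3: "\<phi>0 = Ef 0 F3 V3" using M0_Ef[OF assms(3)] by blast
  obtain F4 V4 where F4: "validF F4" and e4: "\<phi>1 = Ef 1 F4 V4" using M1_Ef[OF assms(4)] by blast
  note ef1 = even_facts[OF F1, of V1] and ef3 = even_facts[OF F3, of V3]
  note of2 = odd_facts[OF F2, of V2] and of4 = odd_facts[OF F4, of V4]
  have l1: "((\<lambda>\<epsilon>. l2_inner \<psi>0 (S_op \<epsilon> \<phi>0)) \<longlongrightarrow> - l2_inner \<psi>0 (t_op \<phi>0)) (at_right 0)"
    unfolding e1 e3 by (rule lim_right[OF F3 L2_Ef[OF F1] ef3(1) ef3(2) ef3(3)])
  have l2: "((\<lambda>\<epsilon>. l2_inner (S_op \<epsilon> \<psi>0) \<phi>0) \<longlongrightarrow> - l2_inner (t_op \<psi>0) \<phi>0) (at_right 0)"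
    unfolding e1 e3 by (rule lim_left[OF F1 L2_Ef[OF F3] ef1(1) ef1(2) ef1(3)])
  have l3: "((\<lambda>\<epsilon>. l2_inner \<psi>1 (Sadj_op \<epsilon> \<phi>1)) \<longlongrightarrow> - l2_inner \<psi>1 (tadj_op \<phi>1)) (at_right 0)"
    unfolding e2 e4 by (rule lim_right[OF F4 L2_Ef[OF F2] of4(1) of4(2) of4(3)])
  have l4: "((\<lambda>\<epsilon>. l2_inner (Sadj_op \<epsilon> \<psi>1) \<phi>1) \<longlongrightarrow> - l2_inner (tadj_op \<psi>1) \<phi>1) (at_right 0)"
    unfolding e2 e4 by (rule lim_left[OF F2 L2_Ef[OF F4] of2(1) of2(2) of2(3)])
  have "((\<lambda>\<epsilon>. t_eps \<epsilon> \<psi>0 \<psi>1 \<phi>0 \<phi>1) \<longlongrightarrow>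
     (- l2_inner \<psi>0 (t_op \<phi>0) + - l2_inner (t_op \<psi>0) \<phi>0) / 2 +
     (- l2_inner \<psi>1 (tadj_op \<phi>1) + - l2_inner (tadj_op \<psi>1) \<phi>1) / 2) (at_right 0)"
    unfolding t_eps_def by (intro tendsto_intros l1 l2 l3 l4) simp_all
  moreover have "(- l2_inner \<psi>0 (t_op \<phi>0) + - l2_inner (t_op \<psi>0) \<phi>0) / 2 +
     (- l2_inner \<psi>1 (tadj_op \<phi>1) + - l2_inner (tadj_op \<psi>1) \<phi>1) / 2 = t_AB \<psi>0 \<psi>1 \<phi>0 \<phi>1"
    unfolding t_AB_def by (simp add: diff_divide_distrib add_divide_distrib)
  ultimately show ?thesis by simp
qed


end
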